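(* Let $(X,d)$ be a proper metric space, $x_0\in X$, and $f:X\to X$ continuous such that $f_*:(\mathcal P_1(X),w_1)\to(\mathcal P_1(X),w_1)$ is continuous. Suppose there are $R_0\ge0$, $0\le c<1$ and $m>0$ such that $f^m(B_R)\subset B_{cR}$ for all $R\ge R_0$, where $B_R$ is the closed ball of radius $R$ around $x_0$. Then every bounded closed set $B^w\subset\mathcal P_1(X)$ is $f_*$-admissible.
   Context: A metric space is proper if closed bounded sets are compact. $\mathcal P_1(X)$ is the set of Borel probability measures with finite first moment, metrized by $w_1(\mu,\nu)=\inf_{\pi\in\Pi(\mu,\nu)}\int d(x,y)\,d\pi$. $f_*\mu=\mu\circ f^{-1}$ is the push-forward. A closed bounded set $N$ is $F$-admissible if, whenever $F^k(\mu_n)\in N$ for $0\le k\le m_n$ with $m_n\to\infty$, the sequence $F^{m_n}(\mu_n)$ has a convergent subsequence. *)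

theory Defs
  imports "HOL-Probability.Probability"
begin

definition proper_space :: "'a::metric_space itself \<Rightarrow> bool" where
  "proper_space _ \<longleftrightarrow> (\<forall>S::'a set. closed S \<and> bounded S \<longrightarrow> compact S)"

definition P1 :: "'a::metric_space measure set" where
  "P1 = {M. prob_space M \<and> sets M = sets borel \<and>
            (\<exists>x0. (\<integral>\<^sup>+ x. ennreal (dist x0 x) \<partial>M) < \<infinity>)}"

definition couplings :: "'a::metric_space measure \<Rightarrow> 'a measure \<Rightarrow> ('a \<times> 'a) measure set" where
  "couplings \<mu> \<nu> = {\<pi>. sets \<pi> = sets (borel \<Otimes>\<^sub>M borel) \<and>
      distr \<pi> borel fst = \<mu> \<and> distr \<pi> borel snd = \<nu>}"

definition w1 :: "'a::metric_space measure \<Rightarrow> 'a measure \<Rightarrow> real" where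
  "w1 \<mu> \<nu> = enn2real (INF \<pi>\<in>couplings \<mu> \<nu>. \<integral>\<^sup>+ p. ennreal (dist (fst p) (snd p)) \<partial>\<pi>)"

definition pushfwd :: "('a::metric_space \<Rightarrow> 'a) \<Rightarrow> 'a measure \<Rightarrow> 'a measure" where
  "pushfwd f \<mu> = distr \<mu> borel f"

definition w1_continuous :: "('a::metric_space measure \<Rightarrow> 'a measure) \<Rightarrow> bool" where
  "w1_continuous F \<longleftrightarrow> (\<forall>\<mu>\<in>P1. \<forall>e>0. \<exists>d>0. \<forall>\<nu>\<in>P1. w1 \<mu> \<nu> < d \<longrightarrow> w1 (F \<mu>) (F \<nu>) < e)"

definition w1_bounded :: "'a::metric_space measure set \<Rightarrow> bool" where
  "w1_bounded N \<longleftrightarrow> (\<exists>\<nu>\<in>P1. \<exists>r. \<forall>\<mu>\<in>N. w1 \<nu> \<mu> \<le> r)"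

definition w1_closed :: "'a::metric_space measure set \<Rightarrow> bool" where
  "w1_closed N \<longleftrightarrow> (\<forall>s \<mu>. (\<forall>n. s n \<in> N) \<and> \<mu> \<in> P1 \<and> (\<lambda>n. w1 (s n) \<mu>) \<longlonglongrightarrow> 0 \<longrightarrow> \<mu> \<in> N)"

definition admissible :: "('a::metric_space measure \<Rightarrow> 'a measure) \<Rightarrow> 'a measure set \<Rightarrow> bool" where
  "admissible F N \<longleftrightarrow> (\<forall>(s::nat \<Rightarrow> 'a measure) (m::nat \<Rightarrow> nat).
     filterlim m at_top sequentially \<and> (\<forall>n. \<forall>k\<le>m n. (F ^^ k) (s n) \<in> N) \<longrightarrow>
     (\<exists>r \<mu>. strict_mono r \<and> \<mu> \<in> P1 \<and>
        (\<lambda>n. w1 ((F ^^ m (r n)) (s (r n))) \<mu>) \<longlonglongrightarrow> 0))"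

end

theory Submission
  imports Defs
begin

lemma proper_compact_cball:
  fixes x0 :: "'a::metric_space"
  assumes "proper_space TYPE('a)"
  shows "compact (cball x0 R)"
  using assms unfolding proper_space_def by auto

lemma proper_separable:
  fixes x0 :: "'a::metric_space"
  assumes "proper_space TYPE('a)"
  shows "\<exists>D :: 'a set. countable D \<and> (\<forall>x e. e > 0 \<longrightarrow> (\<exists>z\<in>D. dist x z < e))"
proof -
  have "\<exists>F. finite F \<and> cball x0 (real n) \<subseteq> (\<Union>z\<in>F. ball z (1 / real (Suc k)))" for n k
  proof -
    have c: "compact (cball x0 (real n))" by (rule proper_compact_cball[OF assms])
    have "cball x0 (real n) \<subseteq> (\<Union>z\<in>cball x0 (real n). ball z (1 / real (Suc k)))" by auto
    from compactE_image[OF c _ this] show ?thesis by (metis open_ball)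
  qed
  then obtain F where F: "\<And>n k. finite (F n k)" "\<And>n k. cball x0 (real n) \<subseteq> (\<Union>z\<in>F n k. ball z (1 / real (Suc k)))"
    by metis
  define D where "D = (\<Union>n k. F n k)"
  have "countable D" unfolding D_def using F(1) by (intro countable_UN) (auto intro: countable_finite)
  moreover have "\<exists>z\<in>D. dist x z < e" if "e > 0" for x e
  proof -
    obtain n :: nat where n: "dist x0 x \<le> real n" using real_arch_simple by blast
    obtain k :: nat where k: "1 / real (Suc k) < e" using \<open>e>0\<close>
      by (metis nat_approx_posE)
    have "x \<in> cball x0 (real n)" using n by simp
    then obtain z where "z \<in> F n k" "x \<in> ball z (1 / real (Suc k))" using F(2) by blast
    then have "z \<in> D" "dist x z < e" using k unfolding D_def by (auto simp: dist_commute)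
    then show ?thesis by blast
  qed
  ultimately show ?thesis by blast
qed

lemma dist_pair_meas:
  fixes x0 :: "'a::metric_space"
  assumes "proper_space TYPE('a)"
  shows "(\<lambda>p. dist (fst p) (snd p)) \<in> borel_measurable (borel \<Otimes>\<^sub>M (borel :: 'a measure))"
proof -
  obtain D :: "'a set" where D: "countable D" "\<And>x e. e > 0 \<Longrightarrow> \<exists>z\<in>D. dist x z < e"
    using proper_separable[OF assms] by metis
  show ?thesis
  proof (rule borel_measurableI_less)
    fix r :: real
    define I where "I = {(z,a,b). z \<in> D \<and> a \<in> \<rat> \<and> b \<in> \<rat> \<and> a + b < r}"
    have cI: "countable I"
    proof -
      have "I \<subseteq> D \<times> \<rat> \<times> \<rat>" unfolding I_def by auto
      moreover have "countable (D \<times> (\<rat>::real set) \<times> (\<rat>::real set))" using D(1) countable_rat by auto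
      ultimately show ?thesis by (rule countable_subset)
    qed
    have eq: "{p::'a\<times>'a. p \<in> space (borel \<Otimes>\<^sub>M borel) \<and> dist (fst p) (snd p) < r} = (\<Union>(z,a,b)\<in>I. ball z a \<times> ball z b)"
    proof (intro equalityI subsetI)
      fix p :: "'a \<times> 'a" assume "p \<in> {p \<in> space (borel \<Otimes>\<^sub>M borel). dist (fst p) (snd p) < r}"
      then obtain x y where p: "p = (x,y)" and lt: "dist x y < r" by (cases p) auto
      define \<delta> where "\<delta> = (r - dist x y) / 3"
      have \<delta>: "\<delta> > 0" using lt unfolding \<delta>_def by simp
      obtain z where z: "z \<in> D" "dist x z < \<delta>" using D(2)[OF \<delta>] by blast
      obtain a where a: "a \<in> \<rat>" "dist x z < a" "a < \<delta>" using Rats_dense_in_real[OF z(2)] by blast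
      have "dist z y \<le> dist x z + dist x y" using dist_triangle[of z y x] by (simp add: dist_commute)
      moreover have "r - 2 * \<delta> = dist x y + \<delta>" unfolding \<delta>_def by (simp add: field_simps)
      ultimately have "dist z y < r - 2 * \<delta>" using z(2) by linarith
      then obtain b where b: "b \<in> \<rat>" "dist z y < b" "b < r - 2 * \<delta>" using Rats_dense_in_real by blast
      have "(z,a,b) \<in> I" using z a b \<delta> unfolding I_def by auto
      moreover have "p \<in> ball z a \<times> ball z b" using a b p by (simp add: dist_commute)
      ultimately show "p \<in> (\<Union>(z,a,b)\<in>I. ball z a \<times> ball z b)" by blast
    next
      fix p :: "'a \<times> 'a" assume "p \<in> (\<Union>(z,a,b)\<in>I. ball z a \<times> ball z b)"
      then obtain z a b where "(z,a,b) \<in> I" "p \<in> ball z a \<times> ball z b" by blast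
      then have "a + b < r" "dist z (fst p) < a" "dist z (snd p) < b" unfolding I_def by auto
      moreover have "dist (fst p) (snd p) \<le> dist z (fst p) + dist z (snd p)" by (metis dist_commute dist_triangle)
      ultimately show "p \<in> {p \<in> space (borel \<Otimes>\<^sub>M borel). dist (fst p) (snd p) < r}" by (simp add: space_pair_measure)
    qed
    show "{p \<in> space (borel \<Otimes>\<^sub>M (borel::'a measure)). dist (fst p) (snd p) < r} \<in> sets (borel \<Otimes>\<^sub>M (borel::'a measure))"
    proof -
      have "(\<Union>(z,a,b)\<in>I. ball z a \<times> ball z b) \<in> sets (borel \<Otimes>\<^sub>M borel)"
        apply (rule sets.countable_UN'')
         apply (rule cI)
        apply (auto intro!: pair_measureI)
        done
      then show ?thesis using eq by simp
    qed
  qed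
qed


lemma meas_borel_sets:
  assumes "sets M = sets borel" "f \<in> borel_measurable borel"
  shows "f \<in> borel_measurable M"
  using assms measurable_cong_sets by blast

lemma dist_meas[measurable]: "(\<lambda>x. dist (a::'a::metric_space) x) \<in> borel_measurable borel"
  by (intro borel_measurable_continuous_onI continuous_intros)

lemma P1_moment:
  fixes \<mu> :: "'a::metric_space measure"
  assumes "\<mu> \<in> P1"
  shows "(\<integral>\<^sup>+ x. ennreal (dist x0 x) \<partial>\<mu>) < \<infinity>"
proof -
  from assms obtain x1 where p: "prob_space \<mu>" and s: "sets \<mu> = sets borel"
    and f: "(\<integral>\<^sup>+ x. ennreal (dist x1 x) \<partial>\<mu>) < \<infinity>" unfolding P1_def by auto
  interpret prob_space \<mu> by fact
  have m: "(\<lambda>x. ennreal (dist x1 x)) \<in> borel_measurable \<mu>"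
    by (rule meas_borel_sets[OF s]) measurable
  have "(\<integral>\<^sup>+ x. ennreal (dist x0 x) \<partial>\<mu>) \<le> (\<integral>\<^sup>+ x. ennreal (dist x0 x1) + ennreal (dist x1 x) \<partial>\<mu>)"
    by (intro nn_integral_mono) (simp add: dist_triangle ennreal_plus[symmetric] del: ennreal_plus)
  also have "\<dots> = ennreal (dist x0 x1) + (\<integral>\<^sup>+ x. ennreal (dist x1 x) \<partial>\<mu>)"
    by (subst nn_integral_add) (auto simp: m emeasure_space_1)
  also have "\<dots> < \<infinity>" using f by (simp add: less_top[symmetric])
  finally show ?thesis .
qed


lemma coupling_sets: "\<pi> \<in> couplings \<mu> \<nu> \<Longrightarrow> sets \<pi> = sets (borel \<Otimes>\<^sub>M borel)"
  unfolding couplings_def by auto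

lemma marg_fst:
  assumes "\<pi> \<in> couplings \<mu> \<nu>" "g \<in> borel_measurable borel"
  shows "(\<integral>\<^sup>+ p. g (fst p) \<partial>\<pi>) = (\<integral>\<^sup>+ x. g x \<partial>\<mu>)"
proof -
  have s: "sets \<pi> = sets (borel \<Otimes>\<^sub>M borel)" and d: "distr \<pi> borel fst = \<mu>"
    using assms(1) unfolding couplings_def by auto
  have m: "fst \<in> measurable \<pi> borel" unfolding measurable_cong_sets[OF s refl] by measurable
  have "(\<integral>\<^sup>+ x. g x \<partial>\<mu>) = (\<integral>\<^sup>+ x. g x \<partial>distr \<pi> borel fst)" using d by simp
  also have "\<dots> = (\<integral>\<^sup>+ p. g (fst p) \<partial>\<pi>)"
    by (rule nn_integral_distr[OF m]) (simp add: assms(2))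
  finally show ?thesis by simp
qed

lemma marg_snd:
  assumes "\<pi> \<in> couplings \<mu> \<nu>" "g \<in> borel_measurable borel"
  shows "(\<integral>\<^sup>+ p. g (snd p) \<partial>\<pi>) = (\<integral>\<^sup>+ x. g x \<partial>\<nu>)"
proof -
  have s: "sets \<pi> = sets (borel \<Otimes>\<^sub>M borel)" and d: "distr \<pi> borel snd = \<nu>"
    using assms(1) unfolding couplings_def by auto
  have m: "snd \<in> measurable \<pi> borel" unfolding measurable_cong_sets[OF s refl] by measurable
  have "(\<integral>\<^sup>+ x. g x \<partial>\<nu>) = (\<integral>\<^sup>+ x. g x \<partial>distr \<pi> borel snd)" using d by simp
  also have "\<dots> = (\<integral>\<^sup>+ p. g (snd p) \<partial>\<pi>)"
    by (rule nn_integral_distr[OF m]) (simp add: assms(2))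
  finally show ?thesis by simp
qed

lemma prod_coupling:
  assumes "\<mu> \<in> P1" "\<nu> \<in> P1"
  shows "\<mu> \<Otimes>\<^sub>M \<nu> \<in> couplings \<mu> \<nu>"
proof -
  have pm: "prob_space \<mu>" "sets \<mu> = sets borel" "prob_space \<nu>" "sets \<nu> = sets borel"
    using assms unfolding P1_def by auto
  interpret pair_prob_space \<mu> \<nu> using pm by (simp add: pair_prob_space_def pair_sigma_finite_def prob_space_imp_sigma_finite)
  have "distr (\<mu> \<Otimes>\<^sub>M \<nu>) borel fst = distr (\<mu> \<Otimes>\<^sub>M \<nu>) \<mu> fst"
    by (rule distr_cong) (auto simp: pm)
  also have "\<dots> = \<mu>" using prob_space.distr_pair_fst[OF pm(3)] .
  finally have 1: "distr (\<mu> \<Otimes>\<^sub>M \<nu>) borel fst = \<mu>" .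
  have "distr (\<mu> \<Otimes>\<^sub>M \<nu>) borel snd = distr (\<mu> \<Otimes>\<^sub>M \<nu>) \<nu> snd"
    by (rule distr_cong) (auto simp: pm)
  also have "\<dots> = \<nu>"
  proof (intro measure_eqI)
    fix A assume A: "A \<in> sets (distr (\<mu> \<Otimes>\<^sub>M \<nu>) \<nu> snd)"
    then have A': "A \<in> sets \<nu>" by simp
    from A have "emeasure (distr (\<mu> \<Otimes>\<^sub>M \<nu>) \<nu> snd) A = emeasure (\<mu> \<Otimes>\<^sub>M \<nu>) (space \<mu> \<times> A)"
      by (auto simp add: emeasure_distr space_pair_measure dest: sets.sets_into_space intro!: arg_cong2[where f=emeasure])
    with A' show "emeasure (distr (\<mu> \<Otimes>\<^sub>M \<nu>) \<nu> snd) A = emeasure \<nu> A"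
      using M2.emeasure_pair_measure_Times[OF sets.top[of \<mu>] A'] prob_space.emeasure_space_1[OF pm(1)] by simp
  qed simp
  finally have 2: "distr (\<mu> \<Otimes>\<^sub>M \<nu>) borel snd = \<nu>" .
  have 3: "sets (\<mu> \<Otimes>\<^sub>M \<nu>) = sets (borel \<Otimes>\<^sub>M borel)"
    by (rule sets_pair_measure_cong) (auto simp: pm)
  show ?thesis using 1 2 3 unfolding couplings_def by auto
qed

definition cost :: "('a::metric_space \<times> 'a) measure \<Rightarrow> ennreal" where
  "cost \<pi> = (\<integral>\<^sup>+ p. ennreal (dist (fst p) (snd p)) \<partial>\<pi>)"

lemma cost_le_moments:
  assumes "\<pi> \<in> couplings \<mu> \<nu>"
  shows "cost \<pi> \<le> (\<integral>\<^sup>+ x. ennreal (dist x0 x) \<partial>\<mu>) + (\<integral>\<^sup>+ x. ennreal (dist x0 x) \<partial>\<nu>)"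
proof -
  have s: "sets \<pi> = sets (borel \<Otimes>\<^sub>M borel)" using assms by (rule coupling_sets)
  have "cost \<pi> \<le> (\<integral>\<^sup>+ p. ennreal (dist x0 (fst p)) + ennreal (dist x0 (snd p)) \<partial>\<pi>)"
    unfolding cost_def
    by (intro nn_integral_mono) (metis dist_commute dist_triangle ennreal_leI ennreal_plus zero_le_dist)
  also have "\<dots> = (\<integral>\<^sup>+ p. ennreal (dist x0 (fst p)) \<partial>\<pi>) + (\<integral>\<^sup>+ p. ennreal (dist x0 (snd p)) \<partial>\<pi>)"
    by (rule nn_integral_add) (auto simp: measurable_cong_sets[OF s refl])
  also have "\<dots> = (\<integral>\<^sup>+ x. ennreal (dist x0 x) \<partial>\<mu>) + (\<integral>\<^sup>+ x. ennreal (dist x0 x) \<partial>\<nu>)"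
    using marg_fst[OF assms, of "\<lambda>x. ennreal (dist x0 x)"] marg_snd[OF assms, of "\<lambda>x. ennreal (dist x0 x)"]
    by simp
  finally show ?thesis .
qed

lemma INF_cost_finite:
  assumes "\<mu> \<in> P1" "\<nu> \<in> P1"
  shows "(INF \<pi>\<in>couplings \<mu> \<nu>. cost \<pi>) < \<infinity>"
proof -
  have "(INF \<pi>\<in>couplings \<mu> \<nu>. cost \<pi>) \<le> cost (\<mu> \<Otimes>\<^sub>M \<nu>)"
    by (rule INF_lower) (rule prod_coupling[OF assms])
  also have "\<dots> \<le> (\<integral>\<^sup>+ x. ennreal (dist undefined x) \<partial>\<mu>) + (\<integral>\<^sup>+ x. ennreal (dist undefined x) \<partial>\<nu>)"
    by (rule cost_le_moments[OF prod_coupling[OF assms]])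
  also have "\<dots> < \<infinity>" using P1_moment[OF assms(1)] P1_moment[OF assms(2)] by (simp add: less_top[symmetric])
  finally show ?thesis .
qed

lemma w1_eq: "w1 \<mu> \<nu> = enn2real (INF \<pi>\<in>couplings \<mu> \<nu>. cost \<pi>)"
  unfolding w1_def cost_def by simp

lemma w1_le_cost:
  assumes "\<pi> \<in> couplings \<mu> \<nu>" "cost \<pi> \<le> ennreal e" "e \<ge> 0"
  shows "w1 \<mu> \<nu> \<le> e"
proof -
  have "(INF \<pi>\<in>couplings \<mu> \<nu>. cost \<pi>) \<le> ennreal e"
    using INF_lower[OF assms(1), of cost] assms(2) by order
  then have "enn2real (INF \<pi>\<in>couplings \<mu> \<nu>. cost \<pi>) \<le> enn2real (ennreal e)"
    by (intro enn2real_mono) auto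
  then show ?thesis using assms(3) by (simp add: w1_eq)
qed

lemma moment_w1:
  fixes \<nu> \<rho> :: "'a::metric_space measure"
  assumes "\<nu> \<in> P1" "\<rho> \<in> P1" and pr: "proper_space TYPE('a)"
  shows "(\<integral>\<^sup>+ x. ennreal (dist x0 x) \<partial>\<rho>) \<le> (\<integral>\<^sup>+ x. ennreal (dist x0 x) \<partial>\<nu>) + ennreal (w1 \<nu> \<rho>)"
proof -
  let ?M = "(\<integral>\<^sup>+ x. ennreal (dist x0 x) \<partial>\<nu>)"
  have fin: "(INF \<pi>\<in>couplings \<nu> \<rho>. cost \<pi>) < \<infinity>" by (rule INF_cost_finite[OF assms(1,2)])
  have "(\<integral>\<^sup>+ x. ennreal (dist x0 x) \<partial>\<rho>) \<le> ?M + cost \<pi>" if \<pi>: "\<pi> \<in> couplings \<nu> \<rho>" for \<pi>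
  proof -
    have s: "sets \<pi> = sets (borel \<Otimes>\<^sub>M borel)" using \<pi> by (rule coupling_sets)
    have "(\<integral>\<^sup>+ x. ennreal (dist x0 x) \<partial>\<rho>) = (\<integral>\<^sup>+ p. ennreal (dist x0 (snd p)) \<partial>\<pi>)"
      using marg_snd[OF \<pi>, of "\<lambda>x. ennreal (dist x0 x)"] by simp
    also have "\<dots> \<le> (\<integral>\<^sup>+ p. ennreal (dist x0 (fst p)) + ennreal (dist (fst p) (snd p)) \<partial>\<pi>)"
      by (intro nn_integral_mono) (metis dist_triangle ennreal_leI ennreal_plus zero_le_dist)
    also have "\<dots> = (\<integral>\<^sup>+ p. ennreal (dist x0 (fst p)) \<partial>\<pi>) + cost \<pi>"
      unfolding cost_def using dist_pair_meas[OF pr]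
      by (intro nn_integral_add) (auto simp: measurable_cong_sets[OF s refl])
    also have "(\<integral>\<^sup>+ p. ennreal (dist x0 (fst p)) \<partial>\<pi>) = ?M"
      using marg_fst[OF \<pi>, of "\<lambda>x. ennreal (dist x0 x)"] by simp
    finally show ?thesis .
  qed
  note key = this
  let ?I = "(INF \<pi>\<in>couplings \<nu> \<rho>. cost \<pi>)"
  have "(\<integral>\<^sup>+ x. ennreal (dist x0 x) \<partial>\<rho>) \<le> (?M + ?I)"
  proof (rule ennreal_le_epsilon)
    fix e :: real assume e: "0 < e"
    have Ie: "?I = ennreal (enn2real ?I)" using fin by (simp add: less_top)
    have "ennreal (enn2real ?I) < ennreal (enn2real ?I + e)" using e by (intro ennreal_lessI) (simp_all add: add_nonneg_pos)
    also have "\<dots> = ennreal (enn2real ?I) + ennreal e" using e by (simp add: ennreal_plus)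
    finally have "?I < ?I + ennreal e" using Ie by metis
    then obtain \<pi> where \<pi>: "\<pi> \<in> couplings \<nu> \<rho>" "cost \<pi> < ?I + ennreal e"
      unfolding INF_less_iff by blast
    have "(\<integral>\<^sup>+ x. ennreal (dist x0 x) \<partial>\<rho>) \<le> ?M + cost \<pi>" by (rule key[OF \<pi>(1)])
    also have "\<dots> \<le> ?M + (?I + ennreal e)" using \<pi>(2) by (intro add_left_mono) simp
    finally show "(\<integral>\<^sup>+ x. ennreal (dist x0 x) \<partial>\<rho>) \<le> ?M + ?I + ennreal e" by (simp add: ac_simps)
  qed
  also have "?I = ennreal (w1 \<nu> \<rho>)"
    using fin by (simp add: w1_eq less_top)
  finally show ?thesis .
qed


definition tailK :: "'a::metric_space \<Rightarrow> real \<Rightarrow> 'a measure \<Rightarrow> ennreal" where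
  "tailK x0 K \<nu> = (\<integral>\<^sup>+ y. ennreal (if K < dist x0 y then dist x0 y else 0) \<partial>\<nu>)"



lemma funpow_meas:
  assumes "continuous_on UNIV (f::'a::metric_space \<Rightarrow> 'a)"
  shows "(f ^^ k) \<in> borel_measurable borel"
proof -
  have "continuous_on UNIV (f ^^ k)"
  proof (induction k)
    case 0 then show ?case by (simp add: continuous_on_id)
  next
    case (Suc k)
    then show ?case using assms by (simp add: continuous_on_compose2[of UNIV f UNIV "f ^^ k"])
  qed
  then show ?thesis by (rule borel_measurable_continuous_onI)
qed

lemma pushfwd_iter:
  assumes "continuous_on UNIV (f::'a::metric_space \<Rightarrow> 'a)" "sets \<rho> = sets borel"
  shows "(pushfwd f ^^ k) \<rho> = distr \<rho> borel (f ^^ k)"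
proof (induction k)
  case 0
  have "distr \<rho> borel (\<lambda>x. x) = distr \<rho> \<rho> (\<lambda>x. x)" by (rule distr_cong) (auto simp: assms)
  then show ?case by (simp add: distr_id)
next
  case (Suc k)
  have mk: "(f ^^ k) \<in> measurable \<rho> borel"
    using funpow_meas[OF assms(1)] measurable_cong_sets[OF assms(2) refl] by blast
  have mf: "f \<in> measurable borel borel" using funpow_meas[OF assms(1), of 1] by simp
  have "(pushfwd f ^^ Suc k) \<rho> = pushfwd f ((pushfwd f ^^ k) \<rho>)" by simp
  also have "\<dots> = pushfwd f (distr \<rho> borel (f ^^ k))" using Suc by simp
  also have "\<dots> = distr (distr \<rho> borel (f ^^ k)) borel f" by (simp add: pushfwd_def)
  also have "\<dots> = distr \<rho> borel (f \<circ> (f ^^ k))" by (rule distr_distr[OF mf mk])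
  finally show ?case by (simp add: comp_def)
qed

lemma contraction_iter:
  fixes f :: "'a::metric_space \<Rightarrow> 'a"
  assumes "R0 \<ge> 0" "0 \<le> c" "c < 1"
    and H: "\<forall>R\<ge>R0. (f ^^ m) ` cball x0 R \<subseteq> cball x0 (c * R)"
  shows "dist x0 ((f ^^ (j * m)) x) \<le> c ^ j * dist x0 x + R0 / (1 - c)"
proof (induction j)
  case 0 then show ?case using assms by simp
next
  case (Suc j)
  define A where "A = R0 / (1 - c)"
  have A: "A \<ge> 0" "c * A + R0 = A" using assms unfolding A_def by (auto simp: field_simps)
  define y where "y = (f ^^ (j * m)) x"
  have eq: "(f ^^ (Suc j * m)) x = (f ^^ m) y"
    unfolding y_def by (simp add: funpow_add)
  define R where "R = max (dist x0 y) R0"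
  have "y \<in> cball x0 R" unfolding R_def by simp
  moreover have "R \<ge> R0" unfolding R_def by simp
  ultimately have "(f ^^ m) y \<in> cball x0 (c * R)" using H by blast
  then have "dist x0 ((f ^^ m) y) \<le> c * R" by simp
  also have "\<dots> \<le> c * dist x0 y + c * R0" unfolding R_def using assms by (simp add: max_def mult_left_mono)
  also have "\<dots> \<le> c * (c ^ j * dist x0 x + A) + R0"
    using Suc.IH assms unfolding y_def A_def by (intro add_mono mult_left_mono) (auto intro: mult_left_le_one_le)
  also have "\<dots> = c ^ Suc j * dist x0 x + (c * A + R0)" by (simp add: algebra_simps)
  finally show ?case using A eq unfolding A_def by simp
qed

lemma tail_iter:
  fixes f :: "'a::metric_space \<Rightarrow> 'a"
  assumes cf: "continuous_on UNIV f" and s: "sets \<rho> = sets borel"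
    and c: "0 \<le> c" and bnd: "\<And>x. dist x0 (G x) \<le> c * dist x0 x + A" and A: "A \<ge> 0" and K: "K \<ge> 2 * A"
    and G: "G \<in> borel_measurable borel"
  shows "tailK x0 K (distr \<rho> borel G) \<le> ennreal (2 * c) * (\<integral>\<^sup>+ x. ennreal (dist x0 x) \<partial>\<rho>)"
proof -
  have mG: "G \<in> measurable \<rho> borel" using G measurable_cong_sets[OF s refl] by blast
  have "tailK x0 K (distr \<rho> borel G) = (\<integral>\<^sup>+ x. ennreal (if K < dist x0 (G x) then dist x0 (G x) else 0) \<partial>\<rho>)"
    unfolding tailK_def by (rule nn_integral_distr[OF mG]) measurable
  also have "\<dots> \<le> (\<integral>\<^sup>+ x. ennreal (2 * c) * ennreal (dist x0 x) \<partial>\<rho>)"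
  proof (intro nn_integral_mono)
    fix x
    have "(if K < dist x0 (G x) then dist x0 (G x) else 0) \<le> 2 * c * dist x0 x"
    proof (cases "K < dist x0 (G x)")
      case True
      then have "K < c * dist x0 x + A" using bnd[of x] by linarith
      then have "A < c * dist x0 x" using K A by linarith
      then show ?thesis using True bnd[of x] by simp
    qed (use c in simp)
    then show "ennreal (if K < dist x0 (G x) then dist x0 (G x) else 0) \<le> ennreal (2 * c) * ennreal (dist x0 x)"
      by (simp add: ennreal_mult[symmetric] c ennreal_leI del: ennreal_mult)
  qed
  also have "\<dots> = ennreal (2 * c) * (\<integral>\<^sup>+ x. ennreal (dist x0 x) \<partial>\<rho>)"
    by (rule nn_integral_cmult) (rule meas_borel_sets[OF s], measurable)
  finally show ?thesis .
qed


lemma indsum_bounds: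
  fixes b :: "'w \<Rightarrow> real"
  assumes fin: "finite W" and disj: "disjoint_family_on S W"
    and b: "\<And>w. w \<in> W \<Longrightarrow> 0 \<le> b w" "\<And>w. w \<in> W \<Longrightarrow> b w \<le> 1"
  shows "0 \<le> (\<Sum>w\<in>W. b w * indicator (S w) x)" "(\<Sum>w\<in>W. b w * indicator (S w) x) \<le> 1"
proof -
  show "0 \<le> (\<Sum>w\<in>W. b w * indicator (S w) x)" by (rule sum_nonneg) (simp add: b(1))
  show "(\<Sum>w\<in>W. b w * indicator (S w) x) \<le> 1"
  proof (cases "\<exists>w0\<in>W. x \<in> S w0")
    case True
    then obtain w0 where w0: "w0 \<in> W" "x \<in> S w0" by blast
    have "(\<Sum>w\<in>W. b w * indicator (S w) x) = b w0 * indicator (S w0) x + (\<Sum>w\<in>W-{w0}. b w * indicator (S w) x)"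
      by (rule sum.remove[OF fin w0(1)])
    also have "(\<Sum>w\<in>W-{w0}. b w * indicator (S w) x) = 0"
    proof (intro sum.neutral ballI)
      fix w assume "w \<in> W - {w0}"
      then have "x \<notin> S w" using disj w0 unfolding disjoint_family_on_def by blast
      then show "b w * indicator (S w) x = 0" by simp
    qed
    finally show ?thesis using w0 b by simp
  next
    case False
    then have "(\<Sum>w\<in>W. b w * indicator (S w) x) = 0" by (intro sum.neutral) auto
    then show ?thesis by simp
  qed
qed

lemma ennsum_ind:
  assumes "\<And>w. w \<in> W \<Longrightarrow> 0 \<le> b w"
  shows "(\<Sum>w\<in>W. ennreal (b w) * indicator (S w) x) = ennreal (\<Sum>w\<in>W. b w * indicator (S w) x)"
proof -
  have "(\<Sum>w\<in>W. ennreal (b w) * indicator (S w) x) = (\<Sum>w\<in>W. ennreal (b w * indicator (S w) x))"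
    by (intro sum.cong refl) (simp add: ennreal_mult'' ennreal_indicator)
  also have "\<dots> = ennreal (\<Sum>w\<in>W. b w * indicator (S w) x)"
    using assms by (intro sum_ennreal) auto
  finally show ?thesis .
qed

locale side = prob_space M for M :: "'a measure" +
  fixes W :: "'w set" and S :: "'w \<Rightarrow> 'a set" and a :: "'w \<Rightarrow> real"
  assumes fin: "finite W" and S: "\<And>w. w \<in> W \<Longrightarrow> S w \<in> sets M"
    and dS: "disjoint_family_on S W"
    and a0: "\<And>w. w \<in> W \<Longrightarrow> 0 \<le> a w" and aS: "\<And>w. w \<in> W \<Longrightarrow> a w \<le> measure M (S w)"
begin

definition F where "F x = (\<Sum>w\<in>W. (a w / measure M (S w)) * indicator (S w) x)"

lemma b_bounds: "w \<in> W \<Longrightarrow> 0 \<le> a w / measure M (S w)" "w \<in> W \<Longrightarrow> a w / measure M (S w) \<le> 1"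
  using a0 aS measure_nonneg[of M "S w"] by (auto simp: divide_le_eq_1 less_le)

lemma F_bounds: "0 \<le> F x" "F x \<le> 1"
  unfolding F_def using indsum_bounds[OF fin dS, of "\<lambda>w. a w / measure M (S w)"] b_bounds by auto

lemma F_meas[measurable]: "F \<in> borel_measurable M"
  unfolding F_def by (intro borel_measurable_sum borel_measurable_times borel_measurable_const borel_measurable_indicator) (auto simp: S)

lemma sum_a_le: "(\<Sum>w\<in>W. a w) \<le> 1"
proof -
  have "(\<Sum>w\<in>W. a w) \<le> (\<Sum>w\<in>W. measure M (S w))" using aS by (intro sum_mono) auto
  also have "\<dots> = measure M (\<Union>w\<in>W. S w)"
    using fin S dS by (intro measure_finite_Union[symmetric]) auto
  also have "\<dots> \<le> 1" by (rule prob_le_1)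
  finally show ?thesis .
qed

lemma ennF: "(\<Sum>w\<in>W. ennreal (a w / measure M (S w)) * indicator (S w) x) = ennreal (F x)"
  unfolding F_def by (rule ennsum_ind) (use b_bounds in auto)

lemma int_ennF: "(\<integral>\<^sup>+ x. ennreal (F x) \<partial>M) = ennreal (\<Sum>w\<in>W. a w)"
proof -
  have "(\<integral>\<^sup>+ x. ennreal (F x) \<partial>M) = (\<integral>\<^sup>+ x. (\<Sum>w\<in>W. ennreal (a w / measure M (S w)) * indicator (S w) x) \<partial>M)"
    by (simp add: ennF)
  also have "\<dots> = (\<Sum>w\<in>W. (\<integral>\<^sup>+ x. ennreal (a w / measure M (S w)) * indicator (S w) x \<partial>M))"
    using S by (intro nn_integral_sum) auto
  also have "\<dots> = (\<Sum>w\<in>W. ennreal (a w))"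
  proof (intro sum.cong refl)
    fix w assume w: "w \<in> W"
    have "(\<integral>\<^sup>+ x. ennreal (a w / measure M (S w)) * indicator (S w) x \<partial>M) = ennreal (a w / measure M (S w)) * emeasure M (S w)"
      using S[OF w] by (rule nn_integral_cmult_indicator)
    also have "\<dots> = ennreal (a w)"
    proof (cases "measure M (S w) = 0")
      case True
      then have "a w = 0" using a0[OF w] aS[OF w] by simp
      then show ?thesis by simp
    next
      case False
      have "ennreal (a w / measure M (S w)) * emeasure M (S w) = ennreal (a w / measure M (S w)) * ennreal (measure M (S w))"
        by (simp add: emeasure_eq_measure)
      also have "\<dots> = ennreal (a w / measure M (S w) * measure M (S w))"
        by (rule ennreal_mult[symmetric]) (use b_bounds[OF w] in auto)
      also have "a w / measure M (S w) * measure M (S w) = a w" using False by simp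
      finally show ?thesis .
    qed
    finally show "(\<integral>\<^sup>+ x. ennreal (a w / measure M (S w)) * indicator (S w) x \<partial>M) = ennreal (a w)" .
  qed
  also have "\<dots> = ennreal (\<Sum>w\<in>W. a w)" using a0 by (intro sum_ennreal) auto
  finally show ?thesis .
qed

lemma int_ennG: "(\<integral>\<^sup>+ x. ennreal (1 - F x) \<partial>M) = ennreal (1 - (\<Sum>w\<in>W. a w))"
proof -
  have "(\<integral>\<^sup>+ x. ennreal (1 - F x) \<partial>M) + ennreal (\<Sum>w\<in>W. a w) = (\<integral>\<^sup>+ x. ennreal (1 - F x) + ennreal (F x) \<partial>M)"
    by (subst nn_integral_add) (auto simp: int_ennF)
  also have "\<dots> = (\<integral>\<^sup>+ x. 1 \<partial>M)"
    using F_bounds by (intro nn_integral_cong) (simp add: ennreal_plus[symmetric] del: ennreal_plus)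
  also have "\<dots> = 1" by (simp add: emeasure_space_1)
  also have "\<dots> = ennreal (1 - (\<Sum>w\<in>W. a w)) + ennreal (\<Sum>w\<in>W. a w)"
    using sum_a_le a0 by (simp add: ennreal_plus[symmetric] sum_nonneg del: ennreal_plus)
  finally have "ennreal (\<Sum>w\<in>W. a w) + (\<integral>\<^sup>+ x. ennreal (1 - F x) \<partial>M) = ennreal (\<Sum>w\<in>W. a w) + ennreal (1 - (\<Sum>w\<in>W. a w))"
    by (simp only: add.commute)
  then show ?thesis by (simp only: ennreal_add_left_cancel) simp
qed

end


lemma (in pair_sigma_finite) prod_int:
  assumes f[measurable]: "f \<in> borel_measurable M1" and g[measurable]: "g \<in> borel_measurable M2"
  shows "(\<integral>\<^sup>+ p. f (fst p) * g (snd p) \<partial>(M1 \<Otimes>\<^sub>M M2)) = (\<integral>\<^sup>+ x. f x \<partial>M1) * (\<integral>\<^sup>+ y. g y \<partial>M2)"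
proof -
  have "(\<integral>\<^sup>+ p. f (fst p) * g (snd p) \<partial>(M1 \<Otimes>\<^sub>M M2)) = (\<integral>\<^sup>+ x. \<integral>\<^sup>+ y. f x * g y \<partial>M2 \<partial>M1)"
    by (rule M2.nn_integral_fst[symmetric, where f="\<lambda>p. f (fst p) * g (snd p)", simplified]) measurable
  also have "\<dots> = (\<integral>\<^sup>+ x. f x * (\<integral>\<^sup>+ y. g y \<partial>M2) \<partial>M1)"
    by (intro nn_integral_cong nn_integral_cmult) simp
  also have "\<dots> = (\<integral>\<^sup>+ x. f x \<partial>M1) * (\<integral>\<^sup>+ y. g y \<partial>M2)"
    by (rule nn_integral_multc) simp
  finally show ?thesis .
qed

locale gcoup = S1: side M1 W S a + S2: side M2 W T a
  for M1 :: "'a measure" and M2 :: "'b measure" and W :: "'w set" and S T a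
begin

sublocale P: pair_prob_space M1 M2 by unfold_locales

definition r where "r = 1 - (\<Sum>w\<in>W. a w)"

definition cpl where "cpl w = ennreal (a w / (measure M1 (S w) * measure M2 (T w)))"

definition \<phi> where "\<phi> p = (\<Sum>w\<in>W. cpl w * indicator (S w) (fst p) * indicator (T w) (snd p))
   + ennreal (1 - S1.F (fst p)) * ennreal (1 - S2.F (snd p)) * ennreal (1 / r)"

lemma r_nonneg: "0 \<le> r" unfolding r_def using S1.sum_a_le by simp

lemma \<phi>_meas[measurable]: "\<phi> \<in> borel_measurable (M1 \<Otimes>\<^sub>M M2)"
proof -
  have [measurable]: "w \<in> W \<Longrightarrow> S w \<in> sets M1" "w \<in> W \<Longrightarrow> T w \<in> sets M2" for w
    using S1.S S2.S by auto
  show ?thesis unfolding \<phi>_def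
    by (intro borel_measurable_add borel_measurable_sum borel_measurable_times borel_measurable_const
        measurable_compose[OF measurable_fst borel_measurable_indicator]
        measurable_compose[OF measurable_snd borel_measurable_indicator]
        measurable_compose[OF measurable_fst measurable_compose[OF S1.F_meas measurable_ennreal]]
        measurable_compose[OF measurable_snd measurable_compose[OF S2.F_meas measurable_ennreal]]
        borel_measurable_diff) (auto intro: S1.S S2.S)
qed

lemma cpl_m2: assumes w: "w \<in> W" shows "cpl w * emeasure M2 (T w) = ennreal (a w / measure M1 (S w))"
proof (cases "measure M2 (T w) = 0")
  case True
  then have "a w = 0" using S2.a0[OF w] S2.aS[OF w] by simp
  then show ?thesis unfolding cpl_def by simp
next
  case False
  have m1: "0 \<le> measure M1 (S w)" by simp
  have "cpl w * emeasure M2 (T w) = ennreal (a w / (measure M1 (S w) * measure M2 (T w))) * ennreal (measure M2 (T w))"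
    unfolding cpl_def by (simp add: S2.emeasure_eq_measure)
  also have "\<dots> = ennreal (a w / (measure M1 (S w) * measure M2 (T w)) * measure M2 (T w))"
    by (rule ennreal_mult[symmetric]) (use S1.a0[OF w] m1 in auto)
  also have "a w / (measure M1 (S w) * measure M2 (T w)) * measure M2 (T w) = a w / measure M1 (S w)"
    using False by (simp add: field_simps)
  finally show ?thesis .
qed

lemma cpl_m1: assumes w: "w \<in> W" shows "cpl w * emeasure M1 (S w) = ennreal (a w / measure M2 (T w))"
proof (cases "measure M1 (S w) = 0")
  case True
  then have "a w = 0" using S1.a0[OF w] S1.aS[OF w] by simp
  then show ?thesis unfolding cpl_def by simp
next
  case False
  have m2: "0 \<le> measure M2 (T w)" by simp
  have "cpl w * emeasure M1 (S w) = ennreal (a w / (measure M1 (S w) * measure M2 (T w))) * ennreal (measure M1 (S w))"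
    unfolding cpl_def by (simp add: S1.emeasure_eq_measure)
  also have "\<dots> = ennreal (a w / (measure M1 (S w) * measure M2 (T w)) * measure M1 (S w))"
    by (rule ennreal_mult[symmetric]) (use S1.a0[OF w] m2 in auto)
  also have "a w / (measure M1 (S w) * measure M2 (T w)) * measure M1 (S w) = a w / measure M2 (T w)"
    using False by (simp add: field_simps)
  finally show ?thesis .
qed

lemma cpl_m12: assumes w: "w \<in> W" shows "cpl w * (emeasure M1 (S w) * emeasure M2 (T w)) = ennreal (a w)"
proof -
  have "cpl w * (emeasure M1 (S w) * emeasure M2 (T w)) = (cpl w * emeasure M1 (S w)) * emeasure M2 (T w)"
    by (simp add: ac_simps)
  also have "\<dots> = ennreal (a w / measure M2 (T w)) * ennreal (measure M2 (T w))"
    by (simp add: cpl_m1[OF w] S2.emeasure_eq_measure)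
  also have "\<dots> = ennreal (a w)"
  proof (cases "measure M2 (T w) = 0")
    case True
    then have "a w = 0" using S2.a0[OF w] S2.aS[OF w] by simp
    then show ?thesis by simp
  next
    case False
    then show ?thesis using S2.a0[OF w] by (simp add: ennreal_mult[symmetric])
  qed
  finally show ?thesis .
qed

lemma int_snd: "(\<integral>\<^sup>+ t. \<phi> (x, t) \<partial>M2) =
   (\<Sum>w\<in>W. ennreal (a w / measure M1 (S w)) * indicator (S w) x) + ennreal (1 - S1.F x) * ennreal (1 / r) * ennreal r"
proof -
  have [measurable]: "w \<in> W \<Longrightarrow> T w \<in> sets M2" for w using S2.S by auto
  have "(\<integral>\<^sup>+ t. \<phi> (x, t) \<partial>M2) = (\<integral>\<^sup>+ t. (\<Sum>w\<in>W. (cpl w * indicator (S w) x) * indicator (T w) t)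
      + (ennreal (1 - S1.F x) * ennreal (1 / r)) * ennreal (1 - S2.F t) \<partial>M2)"
    unfolding \<phi>_def by (intro nn_integral_cong) (simp add: ac_simps)
  also have "\<dots> = (\<Sum>w\<in>W. (cpl w * indicator (S w) x) * emeasure M2 (T w)) + (ennreal (1 - S1.F x) * ennreal (1 / r)) * ennreal r"
  proof -
    have mG: "(\<lambda>t. ennreal (1 - S2.F t)) \<in> borel_measurable M2" using S2.F_meas by measurable
    have mI: "(\<lambda>t. (\<Sum>w\<in>W. (cpl w * indicator (S w) x) * indicator (T w) t)) \<in> borel_measurable M2"
      by (intro borel_measurable_sum borel_measurable_times borel_measurable_const borel_measurable_indicator) (auto intro: S2.S)
    have A: "(\<integral>\<^sup>+ t. (\<Sum>w\<in>W. (cpl w * indicator (S w) x) * indicator (T w) t) \<partial>M2) = (\<Sum>w\<in>W. (cpl w * indicator (S w) x) * emeasure M2 (T w))"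
      by (subst nn_integral_sum) (auto intro!: sum.cong nn_integral_cmult_indicator S2.S)
    have B: "(\<integral>\<^sup>+ t. (ennreal (1 - S1.F x) * ennreal (1 / r)) * ennreal (1 - S2.F t) \<partial>M2) = (ennreal (1 - S1.F x) * ennreal (1 / r)) * ennreal r"
      by (subst nn_integral_cmult[OF mG]) (simp add: S2.int_ennG r_def)
    show ?thesis by (subst nn_integral_add[OF mI]) (auto simp: A B intro: borel_measurable_times mG)
  qed
  also have "\<dots> = (\<Sum>w\<in>W. ennreal (a w / measure M1 (S w)) * indicator (S w) x) + ennreal (1 - S1.F x) * ennreal (1 / r) * ennreal r"
    by (intro arg_cong2[where f="(+)"] sum.cong refl) (auto simp: cpl_m2[symmetric] ac_simps)
  finally show ?thesis .
qed

lemma int_fst: "(\<integral>\<^sup>+ x. \<phi> (x, t) \<partial>M1) =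
   (\<Sum>w\<in>W. ennreal (a w / measure M2 (T w)) * indicator (T w) t) + ennreal (1 - S2.F t) * ennreal (1 / r) * ennreal r"
proof -
  have [measurable]: "w \<in> W \<Longrightarrow> S w \<in> sets M1" for w using S1.S by auto
  have "(\<integral>\<^sup>+ x. \<phi> (x, t) \<partial>M1) = (\<integral>\<^sup>+ x. (\<Sum>w\<in>W. (cpl w * indicator (T w) t) * indicator (S w) x)
      + (ennreal (1 - S2.F t) * ennreal (1 / r)) * ennreal (1 - S1.F x) \<partial>M1)"
    unfolding \<phi>_def by (intro nn_integral_cong) (simp add: ac_simps)
  also have "\<dots> = (\<Sum>w\<in>W. (cpl w * indicator (T w) t) * emeasure M1 (S w)) + (ennreal (1 - S2.F t) * ennreal (1 / r)) * ennreal r"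
  proof -
    have mG: "(\<lambda>x. ennreal (1 - S1.F x)) \<in> borel_measurable M1" using S1.F_meas by measurable
    have mI: "(\<lambda>x. (\<Sum>w\<in>W. (cpl w * indicator (T w) t) * indicator (S w) x)) \<in> borel_measurable M1"
      by (intro borel_measurable_sum borel_measurable_times borel_measurable_const borel_measurable_indicator) (auto intro: S1.S)
    have A: "(\<integral>\<^sup>+ x. (\<Sum>w\<in>W. (cpl w * indicator (T w) t) * indicator (S w) x) \<partial>M1) = (\<Sum>w\<in>W. (cpl w * indicator (T w) t) * emeasure M1 (S w))"
      by (subst nn_integral_sum) (auto intro!: sum.cong nn_integral_cmult_indicator S1.S)
    have B: "(\<integral>\<^sup>+ x. (ennreal (1 - S2.F t) * ennreal (1 / r)) * ennreal (1 - S1.F x) \<partial>M1) = (ennreal (1 - S2.F t) * ennreal (1 / r)) * ennreal r"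
      by (subst nn_integral_cmult[OF mG]) (simp add: S1.int_ennG r_def)
    show ?thesis by (subst nn_integral_add[OF mI]) (auto simp: A B intro: borel_measurable_times mG)
  qed
  also have "\<dots> = (\<Sum>w\<in>W. ennreal (a w / measure M2 (T w)) * indicator (T w) t) + ennreal (1 - S2.F t) * ennreal (1 / r) * ennreal r"
    by (intro arg_cong2[where f="(+)"] sum.cong refl) (auto simp: cpl_m1[symmetric] ac_simps)
  finally show ?thesis .
qed

lemma AE_snd: "AE x in M1. (\<integral>\<^sup>+ t. \<phi> (x, t) \<partial>M2) = 1"
proof (cases "r = 0")
  case False
  then have rp: "r > 0" using r_nonneg by simp
  have "ennreal (1 / r) * ennreal r = ennreal (1 / r * r)" by (rule ennreal_mult[symmetric]) (use rp in auto)
  also have "\<dots> = 1" using rp by simp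
  finally have one: "ennreal (1 / r) * ennreal r = 1" .
  show ?thesis
  proof (intro AE_I2)
    fix x
    have "(\<integral>\<^sup>+ t. \<phi> (x, t) \<partial>M2) = ennreal (S1.F x) + ennreal (1 - S1.F x)"
      unfolding int_snd S1.ennF by (simp add: mult.assoc one)
    also have "\<dots> = 1" using S1.F_bounds[of x] by (simp add: ennreal_plus[symmetric] del: ennreal_plus)
    finally show "(\<integral>\<^sup>+ t. \<phi> (x, t) \<partial>M2) = 1" .
  qed
next
  case True
  have mG: "(\<lambda>x. ennreal (1 - S1.F x)) \<in> borel_measurable M1" using S1.F_meas by measurable
  have "(\<integral>\<^sup>+ x. ennreal (1 - S1.F x) \<partial>M1) = 0" using S1.int_ennG True by (simp add: r_def)
  then have "AE x in M1. ennreal (1 - S1.F x) = 0" using nn_integral_0_iff_AE[OF mG] by simp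
  then show ?thesis
  proof (rule AE_mp, intro AE_I2 impI)
    fix x assume "ennreal (1 - S1.F x) = 0"
    then have "S1.F x = 1" using S1.F_bounds[of x] by (simp add: ennreal_eq_0_iff)
    then show "(\<integral>\<^sup>+ t. \<phi> (x, t) \<partial>M2) = 1" unfolding int_snd S1.ennF by simp
  qed
qed

lemma AE_fst: "AE t in M2. (\<integral>\<^sup>+ x. \<phi> (x, t) \<partial>M1) = 1"
proof (cases "r = 0")
  case False
  then have rp: "r > 0" using r_nonneg by simp
  have "ennreal (1 / r) * ennreal r = ennreal (1 / r * r)" by (rule ennreal_mult[symmetric]) (use rp in auto)
  also have "\<dots> = 1" using rp by simp
  finally have one: "ennreal (1 / r) * ennreal r = 1" .
  show ?thesis
  proof (intro AE_I2)
    fix t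
    have "(\<integral>\<^sup>+ x. \<phi> (x, t) \<partial>M1) = ennreal (S2.F t) + ennreal (1 - S2.F t)"
      unfolding int_fst S2.ennF by (simp add: mult.assoc one)
    also have "\<dots> = 1" using S2.F_bounds[of t] by (simp add: ennreal_plus[symmetric] del: ennreal_plus)
    finally show "(\<integral>\<^sup>+ x. \<phi> (x, t) \<partial>M1) = 1" .
  qed
next
  case True
  have mG: "(\<lambda>x. ennreal (1 - S2.F x)) \<in> borel_measurable M2" using S2.F_meas by measurable
  have "(\<integral>\<^sup>+ x. ennreal (1 - S2.F x) \<partial>M2) = 0" using S2.int_ennG True by (simp add: r_def)
  then have "AE x in M2. ennreal (1 - S2.F x) = 0" using nn_integral_0_iff_AE[OF mG] by simp
  then show ?thesis
  proof (rule AE_mp, intro AE_I2 impI)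
    fix t assume "ennreal (1 - S2.F t) = 0"
    then have "S2.F t = 1" using S2.F_bounds[of t] by (simp add: ennreal_eq_0_iff)
    then show "(\<integral>\<^sup>+ x. \<phi> (x, t) \<partial>M1) = 1" unfolding int_fst S2.ennF by simp
  qed
qed

lemma marg1: "distr (density (M1 \<Otimes>\<^sub>M M2) \<phi>) M1 fst = M1"
proof (rule measure_eqI)
  show "sets (distr (density (M1 \<Otimes>\<^sub>M M2) \<phi>) M1 fst) = sets M1" by simp
  fix A assume "A \<in> sets (distr (density (M1 \<Otimes>\<^sub>M M2) \<phi>) M1 fst)"
  then have A[measurable]: "A \<in> sets M1" by simp
  have "emeasure (distr (density (M1 \<Otimes>\<^sub>M M2) \<phi>) M1 fst) A = emeasure (density (M1 \<Otimes>\<^sub>M M2) \<phi>) (A \<times> space M2)"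
    using sets.sets_into_space[OF A] by (subst emeasure_distr) (auto simp: space_pair_measure intro!: arg_cong2[where f=emeasure])
  also have "\<dots> = (\<integral>\<^sup>+ p. \<phi> p * indicator (A \<times> space M2) p \<partial>(M1 \<Otimes>\<^sub>M M2))"
    by (rule emeasure_density) auto
  also have "\<dots> = (\<integral>\<^sup>+ x. \<integral>\<^sup>+ t. \<phi> (x, t) * indicator (A \<times> space M2) (x, t) \<partial>M2 \<partial>M1)"
    by (rule S2.nn_integral_fst[symmetric]) measurable
  also have "\<dots> = (\<integral>\<^sup>+ x. (\<integral>\<^sup>+ t. \<phi> (x, t) \<partial>M2) * indicator A x \<partial>M1)"
  proof (intro nn_integral_cong)
    fix x assume x: "x \<in> space M1"
    have "(\<integral>\<^sup>+ t. \<phi> (x, t) * indicator (A \<times> space M2) (x, t) \<partial>M2) = (\<integral>\<^sup>+ t. \<phi> (x, t) * indicator A x \<partial>M2)"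
      by (intro nn_integral_cong) (auto simp: indicator_def)
    also have "\<dots> = (\<integral>\<^sup>+ t. \<phi> (x, t) \<partial>M2) * indicator A x"
      using measurable_compose[OF measurable_Pair1'[OF x] \<phi>_meas] by (rule nn_integral_multc)
    finally show "(\<integral>\<^sup>+ t. \<phi> (x, t) * indicator (A \<times> space M2) (x, t) \<partial>M2) = (\<integral>\<^sup>+ t. \<phi> (x, t) \<partial>M2) * indicator A x" .
  qed
  also have "\<dots> = (\<integral>\<^sup>+ x. indicator A x \<partial>M1)"
    by (intro nn_integral_cong_AE) (use AE_snd in auto)
  also have "\<dots> = emeasure M1 A" by simp
  finally show "emeasure (distr (density (M1 \<Otimes>\<^sub>M M2) \<phi>) M1 fst) A = emeasure M1 A" .
qed

lemma marg2: "distr (density (M1 \<Otimes>\<^sub>M M2) \<phi>) M2 snd = M2"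
proof (rule measure_eqI)
  show "sets (distr (density (M1 \<Otimes>\<^sub>M M2) \<phi>) M2 snd) = sets M2" by simp
  fix A assume "A \<in> sets (distr (density (M1 \<Otimes>\<^sub>M M2) \<phi>) M2 snd)"
  then have A[measurable]: "A \<in> sets M2" by simp
  have "emeasure (distr (density (M1 \<Otimes>\<^sub>M M2) \<phi>) M2 snd) A = emeasure (density (M1 \<Otimes>\<^sub>M M2) \<phi>) (space M1 \<times> A)"
    using sets.sets_into_space[OF A] by (subst emeasure_distr) (auto simp: space_pair_measure intro!: arg_cong2[where f=emeasure])
  also have "\<dots> = (\<integral>\<^sup>+ p. \<phi> p * indicator (space M1 \<times> A) p \<partial>(M1 \<Otimes>\<^sub>M M2))"
    by (rule emeasure_density) auto
  also have "\<dots> = (\<integral>\<^sup>+ t. \<integral>\<^sup>+ x. \<phi> (x, t) * indicator (space M1 \<times> A) (x, t) \<partial>M1 \<partial>M2)"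
    by (rule P.nn_integral_snd[symmetric]) measurable
  also have "\<dots> = (\<integral>\<^sup>+ t. (\<integral>\<^sup>+ x. \<phi> (x, t) \<partial>M1) * indicator A t \<partial>M2)"
  proof (intro nn_integral_cong)
    fix t assume t: "t \<in> space M2"
    have "(\<integral>\<^sup>+ x. \<phi> (x, t) * indicator (space M1 \<times> A) (x, t) \<partial>M1) = (\<integral>\<^sup>+ x. \<phi> (x, t) * indicator A t \<partial>M1)"
      by (intro nn_integral_cong) (auto simp: indicator_def)
    also have "\<dots> = (\<integral>\<^sup>+ x. \<phi> (x, t) \<partial>M1) * indicator A t"
      using measurable_compose[OF measurable_Pair2'[OF t] \<phi>_meas] by (rule nn_integral_multc)
    finally show "(\<integral>\<^sup>+ x. \<phi> (x, t) * indicator (space M1 \<times> A) (x, t) \<partial>M1) = (\<integral>\<^sup>+ x. \<phi> (x, t) \<partial>M1) * indicator A t" .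
  qed
  also have "\<dots> = (\<integral>\<^sup>+ t. indicator A t \<partial>M2)"
    by (intro nn_integral_cong_AE) (use AE_fst in auto)
  also have "\<dots> = emeasure M2 A" by simp
  finally show "emeasure (distr (density (M1 \<Otimes>\<^sub>M M2) \<phi>) M2 snd) A = emeasure M2 A" .
qed

lemma cost_bound:
  fixes c :: "'a \<times> 'b \<Rightarrow> ennreal" and h1 :: "'a \<Rightarrow> ennreal" and h2 :: "'b \<Rightarrow> ennreal"
  assumes c[measurable]: "c \<in> borel_measurable (M1 \<Otimes>\<^sub>M M2)" and \<delta>: "0 \<le> \<delta>"
    and match: "\<And>w x t. w \<in> W \<Longrightarrow> x \<in> S w \<Longrightarrow> t \<in> T w \<Longrightarrow> c (x, t) \<le> ennreal \<delta>"
    and split: "\<And>x t. c (x, t) \<le> h1 x + h2 t"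
    and h1[measurable]: "h1 \<in> borel_measurable M1" and h2[measurable]: "h2 \<in> borel_measurable M2"
  shows "(\<integral>\<^sup>+ p. c p \<partial>density (M1 \<Otimes>\<^sub>M M2) \<phi>) \<le>
    ennreal \<delta> + (\<integral>\<^sup>+ x. ennreal (1 - S1.F x) * h1 x \<partial>M1) + (\<integral>\<^sup>+ t. ennreal (1 - S2.F t) * h2 t \<partial>M2)"
proof -
  have [measurable]: "w \<in> W \<Longrightarrow> S w \<in> sets M1" "w \<in> W \<Longrightarrow> T w \<in> sets M2" for w
    using S1.S S2.S by auto
  define G1 where "G1 x = ennreal (1 - S1.F x)" for x
  define G2 where "G2 t = ennreal (1 - S2.F t)" for t
  have mG1[measurable]: "G1 \<in> borel_measurable M1" unfolding G1_def using S1.F_meas by measurable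
  have mG2[measurable]: "G2 \<in> borel_measurable M2" unfolding G2_def using S2.F_meas by measurable
  have intG1: "integral\<^sup>N M1 G1 = ennreal r" unfolding G1_def r_def using S1.int_ennG by simp
  have intG2: "integral\<^sup>N M2 G2 = ennreal r" unfolding G2_def r_def using S2.int_ennG by simp
  define Q where "Q p = (\<Sum>w\<in>W. cpl w * indicator (S w \<times> T w) p * ennreal \<delta>)" for p
  define L where "L p = G1 (fst p) * G2 (snd p) * ennreal (1 / r)" for p
  have mQ: "Q \<in> borel_measurable (M1 \<Otimes>\<^sub>M M2)" unfolding Q_def
    by (intro borel_measurable_sum borel_measurable_times borel_measurable_const borel_measurable_indicator)
       (auto intro!: pair_measureI)
  have "(\<integral>\<^sup>+ p. c p \<partial>density (M1 \<Otimes>\<^sub>M M2) \<phi>) = (\<integral>\<^sup>+ p. \<phi> p * c p \<partial>(M1 \<Otimes>\<^sub>M M2))"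
    by (rule nn_integral_density) measurable
  also have "\<dots> \<le> (\<integral>\<^sup>+ p. Q p + L p * (h1 (fst p) + h2 (snd p)) \<partial>(M1 \<Otimes>\<^sub>M M2))"
  proof (intro nn_integral_mono)
    fix p :: "'a \<times> 'b"
    obtain x t where p: "p = (x, t)" by (cases p)
    have "\<phi> p * c p = (\<Sum>w\<in>W. cpl w * indicator (S w) x * indicator (T w) t * c p) + L p * c p"
      unfolding \<phi>_def L_def G1_def G2_def p by (simp add: distrib_right sum_distrib_right)
    also have "\<dots> \<le> Q p + L p * (h1 (fst p) + h2 (snd p))"
    proof (intro add_mono mult_left_mono)
      show "(\<Sum>w\<in>W. cpl w * indicator (S w) x * indicator (T w) t * c p) \<le> Q p"
        unfolding Q_def
      proof (intro sum_mono)
        fix w assume w: "w \<in> W"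
        show "cpl w * indicator (S w) x * indicator (T w) t * c p \<le> cpl w * indicator (S w \<times> T w) p * ennreal \<delta>"
          using match[OF w, of x t] unfolding p by (auto simp: indicator_def intro: mult_left_mono)
      qed
      show "c p \<le> h1 (fst p) + h2 (snd p)" using split[of x t] p by simp
    qed simp
    finally show "\<phi> p * c p \<le> Q p + L p * (h1 (fst p) + h2 (snd p))" .
  qed
  also have "\<dots> = (\<integral>\<^sup>+ p. Q p \<partial>(M1 \<Otimes>\<^sub>M M2)) + (\<integral>\<^sup>+ p. L p * (h1 (fst p) + h2 (snd p)) \<partial>(M1 \<Otimes>\<^sub>M M2))"
    by (rule nn_integral_add[OF mQ]) (unfold L_def, measurable)
  finally have main: "(\<integral>\<^sup>+ p. c p \<partial>density (M1 \<Otimes>\<^sub>M M2) \<phi>) \<le> (\<integral>\<^sup>+ p. Q p \<partial>(M1 \<Otimes>\<^sub>M M2)) + (\<integral>\<^sup>+ p. L p * (h1 (fst p) + h2 (snd p)) \<partial>(M1 \<Otimes>\<^sub>M M2))" .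
  have I1: "(\<integral>\<^sup>+ p. Q p \<partial>(M1 \<Otimes>\<^sub>M M2)) \<le> ennreal \<delta>"
  proof -
    have "(\<integral>\<^sup>+ p. Q p \<partial>(M1 \<Otimes>\<^sub>M M2)) = (\<Sum>w\<in>W. (\<integral>\<^sup>+ p. cpl w * ennreal \<delta> * indicator (S w \<times> T w) p \<partial>(M1 \<Otimes>\<^sub>M M2)))"
      unfolding Q_def by (subst nn_integral_sum) (auto intro!: sum.cong nn_integral_cong pair_measureI simp: ac_simps)
    also have "\<dots> = (\<Sum>w\<in>W. ennreal (a w) * ennreal \<delta>)"
    proof (intro sum.cong refl)
      fix w assume w: "w \<in> W"
      have "(\<integral>\<^sup>+ p. cpl w * ennreal \<delta> * indicator (S w \<times> T w) p \<partial>(M1 \<Otimes>\<^sub>M M2)) = cpl w * ennreal \<delta> * emeasure (M1 \<Otimes>\<^sub>M M2) (S w \<times> T w)"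
        using w by (intro nn_integral_cmult_indicator) (auto intro!: pair_measureI)
      also have "\<dots> = cpl w * (emeasure M1 (S w) * emeasure M2 (T w)) * ennreal \<delta>"
        using w by (simp add: S2.emeasure_pair_measure_Times ac_simps)
      also have "\<dots> = ennreal (a w) * ennreal \<delta>" by (simp add: cpl_m12[OF w])
      finally show "(\<integral>\<^sup>+ p. cpl w * ennreal \<delta> * indicator (S w \<times> T w) p \<partial>(M1 \<Otimes>\<^sub>M M2)) = ennreal (a w) * ennreal \<delta>" .
    qed
    also have "\<dots> = ennreal (\<Sum>w\<in>W. a w) * ennreal \<delta>"
    proof -
      have "(\<Sum>w\<in>W. ennreal (a w)) = ennreal (\<Sum>w\<in>W. a w)" by (rule sum_ennreal) (use S1.a0 in auto)
      then show ?thesis by (metis sum_distrib_right)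
    qed
    also have "\<dots> \<le> 1 * ennreal \<delta>" using S1.sum_a_le by (intro mult_right_mono) auto
    finally show ?thesis by simp
  qed
  have I2: "(\<integral>\<^sup>+ p. L p * (h1 (fst p) + h2 (snd p)) \<partial>(M1 \<Otimes>\<^sub>M M2)) \<le>
      (\<integral>\<^sup>+ x. G1 x * h1 x \<partial>M1) + (\<integral>\<^sup>+ t. G2 t * h2 t \<partial>M2)"
  proof (cases "r = 0")
    case True
    then show ?thesis unfolding L_def by simp
  next
    case False
    then have rp: "r > 0" using r_nonneg by simp
    have one: "ennreal (1 / r) * ennreal r = 1"
      using rp by (subst ennreal_mult[symmetric]) auto
    have "(\<integral>\<^sup>+ p. L p * (h1 (fst p) + h2 (snd p)) \<partial>(M1 \<Otimes>\<^sub>M M2)) =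
        (\<integral>\<^sup>+ p. ennreal (1 / r) * ((G1 (fst p) * h1 (fst p)) * G2 (snd p)) + ennreal (1 / r) * (G1 (fst p) * (G2 (snd p) * h2 (snd p))) \<partial>(M1 \<Otimes>\<^sub>M M2))"
      unfolding L_def by (intro nn_integral_cong) (simp add: distrib_left ac_simps)
    also have "\<dots> = ennreal (1 / r) * (\<integral>\<^sup>+ p. (G1 (fst p) * h1 (fst p)) * G2 (snd p) \<partial>(M1 \<Otimes>\<^sub>M M2))
        + ennreal (1 / r) * (\<integral>\<^sup>+ p. G1 (fst p) * (G2 (snd p) * h2 (snd p)) \<partial>(M1 \<Otimes>\<^sub>M M2))"
      by (subst nn_integral_add) (measurable, simp add: nn_integral_cmult)
    also have "(\<integral>\<^sup>+ p. (G1 (fst p) * h1 (fst p)) * G2 (snd p) \<partial>(M1 \<Otimes>\<^sub>M M2)) = (\<integral>\<^sup>+ x. G1 x * h1 x \<partial>M1) * ennreal r"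
      by (subst P.prod_int) (measurable, simp add: intG2)
    also have "(\<integral>\<^sup>+ p. G1 (fst p) * (G2 (snd p) * h2 (snd p)) \<partial>(M1 \<Otimes>\<^sub>M M2)) = ennreal r * (\<integral>\<^sup>+ t. G2 t * h2 t \<partial>M2)"
      by (subst P.prod_int) (measurable, simp add: intG1)
    finally have eq: "(\<integral>\<^sup>+ p. L p * (h1 (fst p) + h2 (snd p)) \<partial>(M1 \<Otimes>\<^sub>M M2)) =
      ennreal (1 / r) * ((\<integral>\<^sup>+ x. G1 x * h1 x \<partial>M1) * ennreal r) + ennreal (1 / r) * (ennreal r * (\<integral>\<^sup>+ t. G2 t * h2 t \<partial>M2))" .
    have e1: "ennreal (1 / r) * (X * ennreal r) = X" for X :: ennreal
    proof -
      have "ennreal (1 / r) * (X * ennreal r) = (ennreal (1 / r) * ennreal r) * X" by (simp only: ac_simps)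
      then show ?thesis by (simp only: one mult_1)
    qed
    have e2: "ennreal (1 / r) * (ennreal r * X) = X" for X :: ennreal
    proof -
      have "ennreal (1 / r) * (ennreal r * X) = (ennreal (1 / r) * ennreal r) * X" by (simp only: ac_simps)
      then show ?thesis by (simp only: one mult_1)
    qed
    show ?thesis unfolding eq e1 e2 by simp
  qed
  have "(\<integral>\<^sup>+ p. c p \<partial>density (M1 \<Otimes>\<^sub>M M2) \<phi>) \<le> ennreal \<delta> + ((\<integral>\<^sup>+ x. G1 x * h1 x \<partial>M1) + (\<integral>\<^sup>+ t. G2 t * h2 t \<partial>M2))"
    using main I1 I2 by (meson add_mono order_trans)
  then show ?thesis unfolding G1_def G2_def by (simp only: add.assoc)
qed

end


locale constr =
  fixes x0 :: "'a::metric_space" and K :: real and \<nu>s :: "nat \<Rightarrow> 'a measure"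
  assumes pr: "proper_space TYPE('a)" and K: "K > 0" and P: "\<And>n. \<nu>s n \<in> P1"
    and tl: "\<And>e. e > 0 \<Longrightarrow> \<exists>N. \<forall>n\<ge>N. tailK x0 K (\<nu>s n) \<le> ennreal e"
begin

abbreviation B where "B \<equiv> cball x0 K"

lemma B_compact: "compact B" by (rule proper_compact_cball[OF pr])

definition eps :: "nat \<Rightarrow> real" where "eps l = 1 / 2 ^ (l + 2)"

lemma eps_pos: "eps l > 0" unfolding eps_def by simp

lemma nets_ex: "\<exists>ys. \<forall>l. B \<subseteq> (\<Union>y\<in>set (ys l). ball y (eps l))"
proof -
  have "\<exists>xs. B \<subseteq> (\<Union>y\<in>set xs. ball y (eps l))" for l
  proof -
    have "B \<subseteq> (\<Union>c\<in>B. ball c (eps l))" using eps_pos by auto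
    from compactE_image[OF B_compact _ this] obtain C where "C \<subseteq> B" "finite C" "B \<subseteq> (\<Union>c\<in>C. ball c (eps l))"
      by (metis open_ball)
    moreover obtain xs where "set xs = C" using \<open>finite C\<close> finite_list by blast
    ultimately show ?thesis by blast
  qed
  then show ?thesis by metis
qed

definition ys where "ys = (SOME ys. \<forall>l. B \<subseteq> (\<Union>y\<in>set (ys l). ball y (eps l)))"

lemma ys: "B \<subseteq> (\<Union>y\<in>set (ys l). ball y (eps l))"
  using someI_ex[OF nets_ex] unfolding ys_def by blast

definition NN where "NN l = length (ys l)"

definition V where "V l i = B \<inter> ball (ys l ! i) (eps l) - (\<Union>j<i. ball (ys l ! j) (eps l))"

lemma V_sets: "V l i \<in> sets borel" unfolding V_def by (intro sets.Diff sets.Int) auto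

lemma V_cover: assumes "x \<in> B" shows "\<exists>i<NN l. x \<in> V l i"
proof -
  obtain y where "y \<in> set (ys l)" "x \<in> ball y (eps l)" using ys assms by blast
  then obtain i where i: "i < NN l" "x \<in> ball (ys l ! i) (eps l)" unfolding NN_def by (metis in_set_conv_nth)
  define i0 where "i0 = (LEAST i. x \<in> ball (ys l ! i) (eps l))"
  have "x \<in> ball (ys l ! i0) (eps l)" unfolding i0_def by (rule LeastI[of _ i]) (rule i(2))
  moreover have "i0 \<le> i" unfolding i0_def by (rule Least_le) (rule i(2))
  moreover have "\<And>j. j < i0 \<Longrightarrow> x \<notin> ball (ys l ! j) (eps l)" unfolding i0_def using not_less_Least by blast
  ultimately show ?thesis using i assms unfolding V_def by (intro exI[of _ i0]) auto
qed

lemma V_disj: assumes "i \<noteq> j" shows "V l i \<inter> V l j = {}"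
proof -
  { fix i j :: nat assume "i < j"
    then have "V l i \<inter> V l j = {}" unfolding V_def by auto }
  then show ?thesis using assms by (metis inf_commute linorder_neqE_nat)
qed

lemma V_diam: assumes "x \<in> V l i" "y \<in> V l i" shows "dist x y \<le> 1 / 2 ^ (l + 1)"
proof -
  have "dist x y \<le> dist (ys l ! i) x + dist (ys l ! i) y" by (metis dist_commute dist_triangle)
  also have "\<dots> \<le> eps l + eps l" using assms unfolding V_def by (intro add_mono) auto
  also have "\<dots> = 1 / 2 ^ (l + 1)" unfolding eps_def by (simp add: field_simps)
  finally show ?thesis .
qed

fun cell :: "nat list \<Rightarrow> 'a set" where
  "cell [] = B"
| "cell (i # w) = cell w \<inter> V (length w) i"

fun WW :: "nat \<Rightarrow> nat list set" where
  "WW 0 = {[]}"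
| "WW (Suc k) = (\<lambda>(i, w). i # w) ` ({..<NN k} \<times> WW k)"

lemma WW_len: "w \<in> WW k \<Longrightarrow> length w = k"
  by (induction k arbitrary: w) auto

lemma WW_fin: "finite (WW k)"
  by (induction k) auto

lemma WW_Suc: "w \<in> WW (Suc k) \<longleftrightarrow> (\<exists>i v. w = i # v \<and> i < NN k \<and> v \<in> WW k)"
  by auto

lemma WW_Cons: "i # v \<in> WW (Suc k) \<longleftrightarrow> i < NN k \<and> v \<in> WW k"
  by auto

lemma cell_sets: "cell w \<in> sets borel"
  by (induction w) (auto intro: V_sets)

lemma cell_B: "cell w \<subseteq> B"
  by (induction w) auto

lemma cell_child: "cell (i # w) \<subseteq> cell w" by auto

lemma cell_children: assumes "w \<in> WW k" shows "cell w = (\<Union>i<NN k. cell (i # w))"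
proof
  show "cell w \<subseteq> (\<Union>i<NN k. cell (i # w))"
  proof
    fix x assume x: "x \<in> cell w"
    then obtain i where "i < NN k" "x \<in> V k i" using V_cover cell_B by blast
    then show "x \<in> (\<Union>i<NN k. cell (i # w))" using x WW_len[OF assms] by auto
  qed
qed auto

lemma cell_children_disj: "disjoint_family_on (\<lambda>i. cell (i # w)) I"
  unfolding disjoint_family_on_def using V_disj by auto

lemma cell_disj: "w \<in> WW k \<Longrightarrow> w' \<in> WW k \<Longrightarrow> w \<noteq> w' \<Longrightarrow> cell w \<inter> cell w' = {}"
proof (induction k arbitrary: w w')
  case 0 then show ?case by simp
next
  case (Suc k)
  then obtain i v i' v' where w: "w = i # v" "v \<in> WW k" and w': "w' = i' # v'" "v' \<in> WW k" by auto
  show ?case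
  proof (cases "v = v'")
    case True
    then have "i \<noteq> i'" using Suc.prems w w' by auto
    then show ?thesis using w w' True V_disj[of i i'] by auto
  next
    case False
    then have "cell v \<inter> cell v' = {}" using Suc.IH w w' by auto
    then show ?thesis using w w' by auto
  qed
qed

lemma cell_diam: assumes "x \<in> cell (i # w)" "y \<in> cell (i # w)" shows "dist x y \<le> 1 / 2 ^ (length w + 1)"
  using assms V_diam by auto

lemma nu_prob: "prob_space (\<nu>s n)" and nu_sets: "sets (\<nu>s n) = sets borel"
  using P[of n] unfolding P1_def by auto

definition q where "q n w = measure (\<nu>s n) (cell w)"

lemma q_bounds: "0 \<le> q n w" "q n w \<le> 1"
  unfolding q_def using prob_space.prob_le_1[OF nu_prob] by auto

lemma q_add: assumes "w \<in> WW k" shows "q n w = (\<Sum>i<NN k. q n (i # w))"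
proof -
  interpret prob_space "\<nu>s n" by (rule nu_prob)
  have "q n w = measure (\<nu>s n) (\<Union>i<NN k. cell (i # w))" unfolding q_def using cell_children[OF assms] by simp
  also have "\<dots> = (\<Sum>i<NN k. measure (\<nu>s n) (cell (i # w)))"
    using cell_sets nu_sets cell_children_disj cell_sets[of "_ # w"] by (intro measure_finite_Union) auto
  finally show ?thesis unfolding q_def .
qed

lemma q_empty: "cell w = {} \<Longrightarrow> q n w = 0" unfolding q_def by simp

end


context constr begin

lemma sum_WW:
  assumes add: "\<And>k w. w \<in> WW k \<Longrightarrow> g w = (\<Sum>i<NN k. g (i # w))"
  shows "(\<Sum>w\<in>WW k. g w) = g []"
proof (induction k)
  case 0 then show ?case by simp
next
  case (Suc k)
  have inj: "inj_on (\<lambda>x. fst x # snd x) ({..<NN k} \<times> WW k)" by (auto simp: inj_on_def)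
  have "(\<Sum>w\<in>WW (Suc k). g w) = (\<Sum>(i, w)\<in>{..<NN k} \<times> WW k. g (i # w))"
    by (simp add: sum.reindex[OF inj] split_def comp_def)
  also have "\<dots> = (\<Sum>i<NN k. \<Sum>w\<in>WW k. g (i # w))" by (rule sum.cartesian_product[symmetric])
  also have "\<dots> = (\<Sum>w\<in>WW k. \<Sum>i<NN k. g (i # w))" by (rule sum.swap)
  also have "\<dots> = (\<Sum>w\<in>WW k. g w)" using add by (intro sum.cong) auto
  finally show ?case using Suc by simp
qed

lemma compl_B_sets: "UNIV - B \<in> sets borel" by auto

lemma compl_small: assumes e: "e > 0" shows "\<exists>N. \<forall>n\<ge>N. measure (\<nu>s n) (UNIV - B) \<le> e"
proof -
  obtain N where N: "\<And>n. n \<ge> N \<Longrightarrow> tailK x0 K (\<nu>s n) \<le> ennreal (e * K)" using tl[of "e * K"] e K by auto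
  have "measure (\<nu>s n) (UNIV - B) \<le> e" if n: "n \<ge> N" for n
  proof -
    interpret prob_space "\<nu>s n" by (rule nu_prob)
    have sB: "UNIV - B \<in> sets (\<nu>s n)" using nu_sets by simp
    have "ennreal K * emeasure (\<nu>s n) (UNIV - B) = (\<integral>\<^sup>+ y. ennreal K * indicator (UNIV - B) y \<partial>\<nu>s n)"
      by (rule nn_integral_cmult_indicator[symmetric]) (rule sB)
    also have "\<dots> \<le> tailK x0 K (\<nu>s n)" unfolding tailK_def
      by (intro nn_integral_mono) (auto simp: indicator_def ennreal_leI)
    also have "\<dots> \<le> ennreal (e * K)" by (rule N[OF n])
    finally have "ennreal (K * measure (\<nu>s n) (UNIV - B)) \<le> ennreal (e * K)"
      using K by (simp add: emeasure_eq_measure ennreal_mult)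
    then have "K * measure (\<nu>s n) (UNIV - B) \<le> e * K" using e K by (simp add: ennreal_le_iff)
    then show ?thesis using K by (simp add: mult.commute)
  qed
  then show ?thesis by blast
qed

lemma q_nil_lim: "(\<lambda>n. q n []) \<longlonglongrightarrow> 1"
proof (rule LIMSEQ_I)
  fix e :: real assume e: "e > 0"
  obtain N where N: "\<And>n. n \<ge> N \<Longrightarrow> measure (\<nu>s n) (UNIV - B) \<le> e / 2" using compl_small[of "e/2"] e by auto
  have "norm (q n [] - 1) < e" if "n \<ge> N" for n
  proof -
    interpret prob_space "\<nu>s n" by (rule nu_prob)
    have "space (\<nu>s n) = UNIV" using nu_sets sets_eq_imp_space_eq by fastforce
    then have "measure (\<nu>s n) (UNIV - B) = 1 - q n []"
      unfolding q_def using prob_compl[of B] nu_sets by simp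
    then show ?thesis using N[OF that] e q_bounds[of n "[]"] by simp
  qed
  then show "\<exists>N. \<forall>n\<ge>N. norm (q n [] - 1) < e" by blast
qed

definition Pd where "Pd = (\<lambda>k s. convergent (\<lambda>j. q (s j) (from_nat k)))"

definition rr where "rr = subseqs.diagseq Pd"

lemma rr_props: "strict_mono rr" "convergent (\<lambda>j. q (rr j) w)"
proof -
  interpret D: subseqs Pd
  proof
    fix k and s :: "nat \<Rightarrow> nat" assume "strict_mono s"
    have sc: "seq_compact {0..1::real}" by (rule compact_imp_seq_compact) simp
    have mem: "\<And>j. q (s j) (from_nat k) \<in> {0..1}" using q_bounds by auto
    from sc[unfolded seq_compact_def, rule_format, of "\<lambda>j. q (s j) (from_nat k)", OF mem]
    obtain l r' where "strict_mono r'" "((\<lambda>j. q (s j) (from_nat k)) \<circ> r') \<longlonglongrightarrow> l"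
      by blast
    then show "\<exists>r'. strict_mono r' \<and> Pd k (s \<circ> r')"
      unfolding Pd_def convergent_def by (auto simp: comp_def)
  qed
  show "strict_mono rr" unfolding rr_def by (rule D.subseq_diagseq)
  define k where "k = to_nat w"
  have "Pd k (D.diagseq \<circ> (+) (Suc k))"
  proof (rule D.diagseq_holds)
    fix r s n assume "strict_mono (r :: nat \<Rightarrow> nat)" "Pd n s"
    then obtain L where "(\<lambda>j. q (s j) (from_nat n)) \<longlonglongrightarrow> L" unfolding Pd_def convergent_def by blast
    from LIMSEQ_subseq_LIMSEQ[OF this \<open>strict_mono r\<close>]
    show "Pd n (s \<circ> r)" unfolding Pd_def convergent_def by (auto simp: comp_def)
  qed
  then obtain L where "(\<lambda>j. q (D.diagseq (Suc k + j)) w) \<longlonglongrightarrow> L"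
    unfolding Pd_def convergent_def k_def by auto
  then have "(\<lambda>j. q (D.diagseq (j + Suc k)) w) \<longlonglongrightarrow> L" by (simp add: add.commute)
  then have "(\<lambda>j. q (D.diagseq j) w) \<longlonglongrightarrow> L" by (rule LIMSEQ_offset)
  then show "convergent (\<lambda>j. q (rr j) w)" unfolding rr_def convergent_def by blast
qed

definition p where "p w = lim (\<lambda>j. q (rr j) w)"

lemma p_lim: "(\<lambda>j. q (rr j) w) \<longlonglongrightarrow> p w"
  unfolding p_def using rr_props(2) by (simp add: convergent_LIMSEQ_iff)

lemma p_bounds: "0 \<le> p w" "p w \<le> 1"
proof -
  have "\<exists>N. \<forall>n\<ge>N. 0 \<le> q (rr n) w" using q_bounds by auto
  from LIMSEQ_le_const[OF p_lim this] show "0 \<le> p w" .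
  have "\<exists>N. \<forall>n\<ge>N. q (rr n) w \<le> 1" using q_bounds by auto
  from LIMSEQ_le_const2[OF p_lim this] show "p w \<le> 1" .
qed

lemma p_add: assumes "w \<in> WW k" shows "p w = (\<Sum>i<NN k. p (i # w))"
proof -
  have "(\<lambda>j. \<Sum>i<NN k. q (rr j) (i # w)) \<longlonglongrightarrow> (\<Sum>i<NN k. p (i # w))"
    by (intro tendsto_sum p_lim)
  moreover have "(\<lambda>j. \<Sum>i<NN k. q (rr j) (i # w)) = (\<lambda>j. q (rr j) w)"
    using q_add[OF assms] by simp
  ultimately have "(\<lambda>j. q (rr j) w) \<longlonglongrightarrow> (\<Sum>i<NN k. p (i # w))" by simp
  from LIMSEQ_unique[OF p_lim this] show ?thesis .
qed

lemma p_nil: "p [] = 1"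
proof -
  have "((\<lambda>n. q n []) \<circ> rr) \<longlonglongrightarrow> 1" by (rule LIMSEQ_subseq_LIMSEQ[OF q_nil_lim rr_props(1)])
  then have "(\<lambda>j. q (rr j) []) \<longlonglongrightarrow> 1" by (simp add: comp_def)
  from LIMSEQ_unique[OF p_lim this] show ?thesis .
qed

lemma p_empty: assumes "cell w = {}" shows "p w = 0"
proof -
  have "(\<lambda>j. q (rr j) w) = (\<lambda>j. 0)" using q_empty[OF assms] by simp
  then have "(\<lambda>j. q (rr j) w) \<longlonglongrightarrow> 0" by simp
  from LIMSEQ_unique[OF p_lim this] show ?thesis .
qed

lemma sum_p: "(\<Sum>w\<in>WW k. p w) = 1"
  using sum_WW[of p k] p_add p_nil by simp

lemma sum_q: "(\<Sum>w\<in>WW k. q n w) = q n []"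
  using sum_WW[of "q n" k] q_add by simp

end


lemma cum_split:
  fixes a :: "nat \<Rightarrow> real"
  assumes "\<And>j. 0 \<le> a j" "0 \<le> u" "u < (\<Sum>j<N. a j)"
  shows "\<exists>i<N. (\<Sum>j<i. a j) \<le> u \<and> u < (\<Sum>j<Suc i. a j)"
  using assms(3)
proof (induction N)
  case 0 then show ?case using assms(2) by simp
next
  case (Suc N)
  show ?case
  proof (cases "u < (\<Sum>j<N. a j)")
    case True then show ?thesis using Suc.IH by (meson less_SucI)
  next
    case False then show ?thesis using Suc.prems by (intro exI[of _ N]) auto
  qed
qed

lemma geom_cauchy:
  fixes z :: "nat \<Rightarrow> 'a::metric_space"
  assumes step: "\<And>k. dist (z k) (z (Suc k)) \<le> 1 / 2 ^ Suc k" and inB: "\<And>k. z k \<in> C" and C: "compact C"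
  shows "\<exists>y\<in>C. z \<longlonglongrightarrow> y \<and> (\<forall>k. dist (z k) y \<le> 1 / 2 ^ k)"
proof -
  have gap: "dist (z k) (z (k + l)) \<le> 1 / 2 ^ k - 1 / 2 ^ (k + l)" for k l
  proof (induction l)
    case 0 then show ?case by simp
  next
    case (Suc l)
    have "dist (z k) (z (k + Suc l)) \<le> dist (z k) (z (k + l)) + dist (z (k + l)) (z (Suc (k + l)))"
      by (simp add: dist_triangle)
    also have "\<dots> \<le> (1 / 2 ^ k - 1 / 2 ^ (k + l)) + 1 / 2 ^ Suc (k + l)" using Suc step by (intro add_mono) auto
    also have "\<dots> = 1 / 2 ^ k - 1 / 2 ^ (k + Suc l)" by (simp add: field_simps)
    finally show ?case .
  qed
  have gap2: "dist (z k) (z n) \<le> 1 / 2 ^ k" if "k \<le> n" for k n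
  proof -
    have "dist (z k) (z (k + (n - k))) \<le> 1 / 2 ^ k - 1 / 2 ^ (k + (n - k))" by (rule gap)
    then have "dist (z k) (z n) \<le> 1 / 2 ^ k - 1 / 2 ^ n" using that by simp
    moreover have "(0::real) \<le> 1 / 2 ^ n" by simp
    ultimately show ?thesis by linarith
  qed
  have "Cauchy z"
  proof (rule metric_CauchyI)
    fix e :: real assume e: "e > 0"
    obtain M where M: "(1/2::real) ^ M < e" using real_arch_pow_inv[OF e] by force
    have "dist (z m) (z n) < e" if "m \<ge> M" "n \<ge> M" for m n
    proof -
      have "dist (z m) (z n) \<le> 1 / 2 ^ min m n"
        using gap2[of m n] gap2[of n m] by (cases "m \<le> n") (auto simp: dist_commute min_def)
      also have "\<dots> \<le> 1 / 2 ^ M" using that by (intro divide_left_mono power_increasing) auto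
      also have "\<dots> < e" using M by (simp add: power_one_over)
      finally show ?thesis .
    qed
    then show "\<exists>M. \<forall>m\<ge>M. \<forall>n\<ge>M. dist (z m) (z n) < e" by blast
  qed
  then obtain y where y: "y \<in> C" "z \<longlonglongrightarrow> y"
    using compact_imp_complete[OF C] inB unfolding complete_def by blast
  have "dist (z k) y \<le> 1 / 2 ^ k" for k
  proof -
    have "(\<lambda>n. z (n + k)) \<longlonglongrightarrow> y" using LIMSEQ_ignore_initial_segment[OF y(2)] .
    then have "(\<lambda>n. dist (z k) (z (n + k))) \<longlonglongrightarrow> dist (z k) y" by (intro tendsto_intros)
    moreover have "\<exists>N. \<forall>n\<ge>N. dist (z k) (z (n + k)) \<le> 1 / 2 ^ k" using gap2 by auto
    ultimately show ?thesis by (rule LIMSEQ_le_const2)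
  qed
  then show ?thesis using y by blast
qed

context constr begin

fun st :: "nat list \<Rightarrow> real" where
  "st [] = 0"
| "st (i # w) = st w + (\<Sum>j<i. p (j # w))"

definition II where "II w = {st w ..< st w + p w}"

lemma child_bounds: assumes "w \<in> WW k" "i < NN k"
  shows "st w \<le> st (i # w)" "st (i # w) + p (i # w) \<le> st w + p w"
proof -
  show "st w \<le> st (i # w)" using p_bounds by (simp add: sum_nonneg)
  have "st (i # w) + p (i # w) = st w + (\<Sum>j<Suc i. p (j # w))" by simp
  also have "(\<Sum>j<Suc i. p (j # w)) \<le> (\<Sum>j<NN k. p (j # w))"
    using assms(2) p_bounds by (intro sum_mono2) auto
  finally show "st (i # w) + p (i # w) \<le> st w + p w" using p_add[OF assms(1)] by simp
qed

lemma II_child: "w \<in> WW k \<Longrightarrow> i < NN k \<Longrightarrow> II (i # w) \<subseteq> II w"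
  using child_bounds[of w k i] unfolding II_def by (auto simp del: st.simps)

lemma st_bounds: "w \<in> WW k \<Longrightarrow> 0 \<le> st w \<and> st w + p w \<le> 1"
proof (induction k arbitrary: w)
  case 0 then show ?case by (simp add: p_nil)
next
  case (Suc k)
  then obtain i v where w: "w = i # v" "i < NN k" "v \<in> WW k" by auto
  then show ?case using Suc.IH[OF w(3)] child_bounds[OF w(3) w(2)] by (auto simp del: st.simps)
qed

lemma II_sub01: "w \<in> WW k \<Longrightarrow> II w \<subseteq> {0..<1}"
  using st_bounds[of w k] unfolding II_def by auto

lemma II_cover: assumes w: "w \<in> WW k" and t: "t \<in> II w" shows "\<exists>i<NN k. t \<in> II (i # w)"
proof -
  have "0 \<le> t - st w" "t - st w < (\<Sum>j<NN k. p (j # w))" using t p_add[OF w] unfolding II_def by auto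
  from cum_split[of "\<lambda>j. p (j # w)", OF p_bounds(1) this]
  obtain i where "i < NN k" "(\<Sum>j<i. p (j # w)) \<le> t - st w" "t - st w < (\<Sum>j<Suc i. p (j # w))" by blast
  then show ?thesis unfolding II_def by (intro exI[of _ i]) auto
qed

lemma II_disj: "w \<in> WW k \<Longrightarrow> w' \<in> WW k \<Longrightarrow> w \<noteq> w' \<Longrightarrow> II w \<inter> II w' = {}"
proof (induction k arbitrary: w w')
  case 0 then show ?case by simp
next
  case (Suc k)
  then obtain i v i' v' where w: "w = i # v" "i < NN k" "v \<in> WW k" and w': "w' = i' # v'" "i' < NN k" "v' \<in> WW k" by auto
  show ?case
  proof (cases "v = v'")
    case True
    then have ne: "i \<noteq> i'" using Suc.prems w w' by auto
    have sep: "II (a # v) \<inter> II (b # v) = {}" if "a < b" "b < NN k" for a b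
    proof -
      have "(\<Sum>j<Suc a. p (j # v)) \<le> (\<Sum>j<b. p (j # v))"
        using that p_bounds by (intro sum_mono2) auto
      then have "st (a # v) + p (a # v) \<le> st (b # v)" by simp
      then show ?thesis unfolding II_def by auto
    qed
    show ?thesis using ne sep[of i i'] sep[of i' i] w w' True by (cases "i < i'") (auto simp del: st.simps)
  next
    case False
    then have "II v \<inter> II v' = {}" using Suc.IH w w' by auto
    then show ?thesis using w w' II_child[of v k i] II_child[of v' k i'] by auto
  qed
qed

lemma II_nil: "II [] = {0..<1}" unfolding II_def by (simp add: p_nil)

lemma II_exists: "t \<in> {0..<1} \<Longrightarrow> \<exists>w\<in>WW k. t \<in> II w"
proof (induction k)
  case 0 then show ?case by (simp add: II_nil)
next
  case (Suc k)
  then obtain w where "w \<in> WW k" "t \<in> II w" by blast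
  then obtain i where "i < NN k" "t \<in> II (i # w)" using II_cover by blast
  then show ?case using \<open>w \<in> WW k\<close> by (intro bexI[of _ "i # w"]) auto
qed

definition path where "path t k = (THE w. w \<in> WW k \<and> t \<in> II w)"

lemma path_unique: assumes "w \<in> WW k" "t \<in> II w" shows "path t k = w"
  unfolding path_def
proof (rule the_equality)
  show "w \<in> WW k \<and> t \<in> II w" using assms by simp
  fix w' assume "w' \<in> WW k \<and> t \<in> II w'"
  then show "w' = w" using II_disj[of w k w'] assms by blast
qed

lemma path_props: assumes "t \<in> {0..<1}" shows "path t k \<in> WW k" "t \<in> II (path t k)"
  using II_exists[OF assms, of k] path_unique by auto

lemma path_Suc: assumes "t \<in> {0..<1}" shows "\<exists>i. path t (Suc k) = i # path t k"
proof -
  obtain i v where pv: "path t (Suc k) = i # v" "i < NN k" "v \<in> WW k" using path_props(1)[OF assms, of "Suc k"] by auto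
  have "t \<in> II (i # v)" using path_props(2)[OF assms, of "Suc k"] pv by simp
  then have "t \<in> II v" using II_child[OF pv(3) pv(2)] by auto
  then have "path t k = v" by (rule path_unique[OF pv(3)])
  then show ?thesis using pv by auto
qed

lemma II_pos: "t \<in> II w \<Longrightarrow> p w > 0" unfolding II_def by auto

definition xr where "xr w = (if cell w = {} then x0 else (SOME x. x \<in> cell w))"

lemma xr_cell: assumes "p w > 0" shows "xr w \<in> cell w"
proof -
  have "cell w \<noteq> {}" using p_empty assms by force
  then show ?thesis unfolding xr_def by (auto intro: someI_ex)
qed

definition Z where "Z k t = xr (path t (Suc k))"

lemma Z_cell: assumes "t \<in> {0..<1}" shows "Z k t \<in> cell (path t (Suc k))"
  unfolding Z_def using path_props[OF assms, of "Suc k"] by (intro xr_cell II_pos) auto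

lemma Z_B: "t \<in> {0..<1} \<Longrightarrow> Z k t \<in> B" using Z_cell cell_B by blast

lemma Z_step: assumes t: "t \<in> {0..<1}" shows "dist (Z k t) (Z (Suc k) t) \<le> 1 / 2 ^ Suc k"
proof -
  obtain i where i: "path t (Suc (Suc k)) = i # path t (Suc k)" using path_Suc[OF t] by blast
  obtain j where j: "path t (Suc k) = j # path t k" using path_Suc[OF t] by blast
  have "Z (Suc k) t \<in> cell (path t (Suc k))" using Z_cell[OF t, of "Suc k"] i cell_child by auto
  moreover have "Z k t \<in> cell (path t (Suc k))" using Z_cell[OF t] .
  ultimately have "dist (Z k t) (Z (Suc k) t) \<le> 1 / 2 ^ (length (path t k) + 1)"
    using cell_diam j by metis
  also have "length (path t k) = k" using WW_len path_props(1)[OF t] by blast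
  finally show ?thesis by simp
qed

definition Y where "Y t = (if t \<in> {0..<1} then lim (\<lambda>k. Z k t) else x0)"

lemma Y_props: assumes t: "t \<in> {0..<1}"
  shows "Y t \<in> B" "(\<lambda>k. Z k t) \<longlonglongrightarrow> Y t" "\<And>k. dist (Z k t) (Y t) \<le> 1 / 2 ^ k"
proof -
  obtain y where y: "y \<in> B" "(\<lambda>k. Z k t) \<longlonglongrightarrow> y" "\<forall>k. dist (Z k t) y \<le> 1 / 2 ^ k"
    using geom_cauchy[of "\<lambda>k. Z k t" B, OF Z_step[OF t] Z_B[OF t] B_compact] by blast
  have "Y t = y" unfolding Y_def using t y(2) by (simp add: limI)
  then show "Y t \<in> B" "(\<lambda>k. Z k t) \<longlonglongrightarrow> Y t" "\<And>k. dist (Z k t) (Y t) \<le> 1 / 2 ^ k" using y by auto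
qed

lemma Y_dist: "dist x0 (Y t) \<le> K"
  using Y_props(1)[of t] K unfolding Y_def by (cases "t \<in> {0..<1}") auto

lemma Y_meas: "Y \<in> borel_measurable borel"
proof -
  define Z' where "Z' k t = (if t \<in> {0..<1} then Z k t else x0)" for k t
  have mZ: "Z' k \<in> borel_measurable borel" for k
  proof (rule borel_measurableI)
    fix S :: "'a set" assume "open S"
    have eq: "Z' k -` S \<inter> space borel = (\<Union>w\<in>{w\<in>WW (Suc k). xr w \<in> S}. II w) \<union> (if x0 \<in> S then UNIV - {0..<1} else {})"
    proof (intro equalityI subsetI)
      fix t assume "t \<in> Z' k -` S \<inter> space borel"
      then have ZS: "Z' k t \<in> S" by simp
      show "t \<in> (\<Union>w\<in>{w\<in>WW (Suc k). xr w \<in> S}. II w) \<union> (if x0 \<in> S then UNIV - {0..<1} else {})"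
      proof (cases "t \<in> {0..<1}")
        case True
        then have "path t (Suc k) \<in> WW (Suc k)" "t \<in> II (path t (Suc k))" "xr (path t (Suc k)) \<in> S"
          using path_props[OF True, of "Suc k"] ZS unfolding Z'_def Z_def by (auto simp del: WW.simps)
        then show ?thesis by blast
      next
        case False then show ?thesis using ZS unfolding Z'_def by auto
      qed
    next
      fix t assume t: "t \<in> (\<Union>w\<in>{w\<in>WW (Suc k). xr w \<in> S}. II w) \<union> (if x0 \<in> S then UNIV - {0..<1} else {})"
      show "t \<in> Z' k -` S \<inter> space borel"
      proof (cases "t \<in> (\<Union>w\<in>{w\<in>WW (Suc k). xr w \<in> S}. II w)")
        case True
        then obtain w where w: "w \<in> WW (Suc k)" "xr w \<in> S" "t \<in> II w" by blast
        then have t01: "t \<in> {0..<1}" using II_sub01 by blast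
        have "path t (Suc k) = w" by (rule path_unique[OF w(1) w(3)])
        then show ?thesis using w t01 unfolding Z'_def Z_def by simp
      next
        case False
        then have "x0 \<in> S" "t \<notin> {0..<1}" using t by (auto split: if_splits)
        then show ?thesis unfolding Z'_def by auto
      qed
    qed
    have fin: "finite {w\<in>WW (Suc k). xr w \<in> S}" using WW_fin by simp
    show "Z' k -` S \<inter> space borel \<in> sets borel"
      unfolding eq using fin by (intro sets.Un sets.finite_UN) (auto simp: II_def)
  qed
  have "(\<lambda>k. Z' k t) \<longlonglongrightarrow> Y t" for t
    using Y_props(2)[of t] unfolding Z'_def Y_def by (cases "t \<in> {0..<1}") auto
  then show ?thesis by (rule borel_measurable_LIMSEQ_metric[OF mZ])
qed

definition L :: "real measure" where "L = density lborel (indicator {0..<1})"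

lemma L_sets: "sets L = sets borel" unfolding L_def by simp

lemma L_II: assumes "w \<in> WW k" shows "emeasure L (II w) = ennreal (p w)"
proof -
  have "emeasure L (II w) = (\<integral>\<^sup>+ t. indicator {0..<1} t * indicator (II w) t \<partial>lborel)"
    unfolding L_def by (rule emeasure_density) (auto simp: II_def)
  also have "\<dots> = (\<integral>\<^sup>+ t. indicator (II w) t \<partial>lborel)"
    using II_sub01[OF assms] by (intro nn_integral_cong) (auto simp: indicator_def)
  also have "\<dots> = ennreal (p w)" unfolding II_def using p_bounds by simp
  finally show ?thesis .
qed

lemma L_prob: "prob_space L"
proof (rule prob_spaceI)
  have "emeasure L UNIV = (\<integral>\<^sup>+ t. indicator {0..<1::real} t * indicator UNIV t \<partial>lborel)"
    unfolding L_def by (subst emeasure_density) auto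
  also have "\<dots> = (\<integral>\<^sup>+ t. indicator {0..<1::real} t \<partial>lborel)" by simp
  also have "\<dots> = emeasure lborel {0..<1::real}" by (rule nn_integral_indicator) simp
  also have "\<dots> = 1" by simp
  finally show "emeasure L (space L) = 1" by (simp add: L_def)
qed

lemma L_measure_II: "w \<in> WW k \<Longrightarrow> measure L (II w) = p w"
  using L_II p_bounds by (simp add: measure_def)

definition \<mu> where "\<mu> = distr L borel Y"

lemma Y_measL: "Y \<in> measurable L borel"
  using Y_meas measurable_cong_sets[OF L_sets refl] by blast

lemma mu_P1: "\<mu> \<in> P1"
proof -
  have "prob_space \<mu>" unfolding \<mu>_def by (rule prob_space.prob_space_distr[OF L_prob Y_measL])
  moreover have "sets \<mu> = sets borel" unfolding \<mu>_def by simp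
  moreover have "(\<integral>\<^sup>+ x. ennreal (dist x0 x) \<partial>\<mu>) < \<infinity>"
  proof -
    have "(\<integral>\<^sup>+ x. ennreal (dist x0 x) \<partial>\<mu>) = (\<integral>\<^sup>+ t. ennreal (dist x0 (Y t)) \<partial>L)"
      unfolding \<mu>_def by (rule nn_integral_distr[OF Y_measL]) measurable
    also have "\<dots> \<le> (\<integral>\<^sup>+ t. ennreal K \<partial>L)" using Y_dist by (intro nn_integral_mono) (simp add: ennreal_leI)
    also have "\<dots> = ennreal K" using prob_space.emeasure_space_1[OF L_prob] by simp
    also have "\<dots> < \<infinity>" by simp
    finally show ?thesis .
  qed
  ultimately show ?thesis unfolding P1_def by blast
qed

end


context constr begin

lemma tail_fin: "tailK x0 K (\<nu>s n) < \<infinity>"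
proof -
  have "tailK x0 K (\<nu>s n) \<le> (\<integral>\<^sup>+ y. ennreal (dist x0 y) \<partial>\<nu>s n)"
    unfolding tailK_def by (intro nn_integral_mono) (simp add: ennreal_leI)
  also have "\<dots> < \<infinity>" by (rule P1_moment[OF P])
  finally show ?thesis .
qed

lemma w1_bound:
  "w1 (\<nu>s n) \<mu> \<le> 2 / 2 ^ k + 2 * K * (1 - (\<Sum>w\<in>WW (Suc k). min (p w) (q n w))) + enn2real (tailK x0 K (\<nu>s n))"
proof -
  define W where "W = WW (Suc k)"
  define a where "a w = min (p w) (q n w)" for w
  interpret gcoup "\<nu>s n" L W cell II a
  proof (rule gcoup.intro)
    show "side (\<nu>s n) W cell a"
    proof (rule side.intro[OF nu_prob], rule side_axioms.intro)
      show "finite W" unfolding W_def by (rule WW_fin)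
      show "cell w \<in> sets (\<nu>s n)" if "w \<in> W" for w using cell_sets nu_sets by simp
      show "disjoint_family_on cell W" unfolding W_def disjoint_family_on_def using cell_disj by blast
      show "0 \<le> a w" if "w \<in> W" for w unfolding a_def using p_bounds q_bounds by simp
      show "a w \<le> measure (\<nu>s n) (cell w)" if "w \<in> W" for w unfolding a_def q_def by simp
    qed
    show "side L W II a"
    proof (rule side.intro[OF L_prob], rule side_axioms.intro)
      show "finite W" unfolding W_def by (rule WW_fin)
      show "II w \<in> sets L" if "w \<in> W" for w using L_sets by (simp add: II_def)
      show "disjoint_family_on II W" unfolding W_def disjoint_family_on_def using II_disj by blast
      show "0 \<le> a w" if "w \<in> W" for w unfolding a_def using p_bounds q_bounds by simp
      show "a w \<le> measure L (II w)" if "w \<in> W" for w using L_measure_II[of w "Suc k"] that unfolding a_def W_def by simp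
    qed
  qed
  define \<pi>' where "\<pi>' = density (\<nu>s n \<Otimes>\<^sub>M L) \<phi>"
  define g where "g p = (fst p, Y (snd p))" for p :: "'a \<times> real"
  define \<pi> where "\<pi> = distr \<pi>' (borel \<Otimes>\<^sub>M borel) g"
  have s\<pi>': "sets \<pi>' = sets (borel \<Otimes>\<^sub>M borel)" unfolding \<pi>'_def
    unfolding sets_density by (rule sets_pair_measure_cong[OF nu_sets L_sets])
  have Ym[measurable]: "Y \<in> borel_measurable borel" by (rule Y_meas)
  have gm: "g \<in> measurable \<pi>' (borel \<Otimes>\<^sub>M borel)"
    unfolding measurable_cong_sets[OF s\<pi>' refl] g_def by measurable
  have m_fst: "fst \<in> measurable \<pi>' borel" unfolding measurable_cong_sets[OF s\<pi>' refl] by measurable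
  have m_snd: "snd \<in> measurable \<pi>' borel" unfolding measurable_cong_sets[OF s\<pi>' refl] by measurable
  have cpl: "\<pi> \<in> couplings (\<nu>s n) \<mu>"
  proof -
    have "distr \<pi> borel fst = distr \<pi>' borel (fst \<circ> g)"
      unfolding \<pi>_def by (rule distr_distr[OF _ gm]) measurable
    also have "\<dots> = distr \<pi>' (\<nu>s n) fst" by (rule distr_cong) (auto simp: g_def nu_sets)
    also have "\<dots> = \<nu>s n" unfolding \<pi>'_def by (rule marg1)
    finally have 1: "distr \<pi> borel fst = \<nu>s n" .
    have "distr \<pi> borel snd = distr \<pi>' borel (snd \<circ> g)"
      unfolding \<pi>_def by (rule distr_distr[OF _ gm]) measurable
    also have "\<dots> = distr \<pi>' borel (Y \<circ> snd)" by (rule distr_cong) (auto simp: g_def)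
    also have "\<dots> = distr (distr \<pi>' borel snd) borel Y" by (rule distr_distr[symmetric, OF Ym m_snd])
    also have "distr \<pi>' borel snd = distr \<pi>' L snd" by (rule distr_cong) (auto simp: L_sets)
    also have "\<dots> = L" unfolding \<pi>'_def by (rule marg2)
    finally have 2: "distr \<pi> borel snd = \<mu>" unfolding \<mu>_def .
    have 3: "sets \<pi> = sets (borel \<Otimes>\<^sub>M borel)" unfolding \<pi>_def by simp
    show ?thesis using 1 2 3 unfolding couplings_def by blast
  qed
  define \<delta> :: real where "\<delta> = 2 / 2 ^ k"
  have dm: "(\<lambda>p. dist (fst p) (snd p)) \<in> borel_measurable (borel \<Otimes>\<^sub>M (borel :: 'a measure))"
    by (rule dist_pair_meas[OF pr])
  have cm: "(\<lambda>p. ennreal (dist (fst p) (Y (snd p)))) \<in> borel_measurable (\<nu>s n \<Otimes>\<^sub>M L)"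
  proof -
    have "(\<lambda>p. dist (fst p) (snd p)) \<circ> g \<in> borel_measurable \<pi>'" by (rule measurable_comp[OF gm dm])
    moreover have e: "sets \<pi>' = sets (\<nu>s n \<Otimes>\<^sub>M L)" unfolding \<pi>'_def by (rule sets_density)
    ultimately have "(\<lambda>p. dist (fst p) (Y (snd p))) \<in> borel_measurable \<pi>'" unfolding g_def comp_def by simp
    then show "(\<lambda>p. ennreal (dist (fst p) (Y (snd p)))) \<in> borel_measurable (\<nu>s n \<Otimes>\<^sub>M L)"
      unfolding measurable_cong_sets[OF e refl] by measurable
  qed
  have "cost \<pi> = (\<integral>\<^sup>+ p. ennreal (dist (fst p) (Y (snd p))) \<partial>\<pi>')"
    unfolding cost_def \<pi>_def
  proof (subst nn_integral_distr[OF gm])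
    show "(\<lambda>p. ennreal (dist (fst p) (snd p))) \<in> borel_measurable (distr \<pi>' (borel \<Otimes>\<^sub>M borel) g)"
      using dm by measurable
  qed (simp add: g_def)
  also have "\<dots> \<le> ennreal \<delta> + (\<integral>\<^sup>+ x. ennreal (1 - S1.F x) * ennreal (dist x0 x) \<partial>\<nu>s n)
        + (\<integral>\<^sup>+ t. ennreal (1 - S2.F t) * ennreal K \<partial>L)"
    unfolding \<pi>'_def
  proof (rule cost_bound[OF cm])
    show "0 \<le> \<delta>" unfolding \<delta>_def by simp
    show "(\<lambda>x. ennreal (dist x0 x)) \<in> borel_measurable (\<nu>s n)" by (rule meas_borel_sets[OF nu_sets]) measurable
    show "(\<lambda>t. ennreal K) \<in> borel_measurable L" by simp
    fix x t
    show "ennreal (dist (fst (x, t)) (Y (snd (x, t)))) \<le> ennreal (dist x0 x) + ennreal K"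
    proof -
      have "dist x (Y t) \<le> dist x0 x + dist x0 (Y t)" by (metis dist_commute dist_triangle)
      also have "\<dots> \<le> dist x0 x + K" using Y_dist by simp
      finally show ?thesis using K by (simp add: ennreal_plus[symmetric] ennreal_leI del: ennreal_plus)
    qed
  next
    fix w x t assume w: "w \<in> W" and x: "x \<in> cell w" and t: "t \<in> II w"
    have t01: "t \<in> {0..<1}" using t II_sub01 w unfolding W_def by blast
    have pw: "path t (Suc k) = w" using path_unique w t unfolding W_def by blast
    obtain i v where wv: "w = i # v" "v \<in> WW k" using w unfolding W_def by auto
    have lv: "length v = k" using WW_len wv(2) by blast
    have xw: "xr w \<in> cell w" by (rule xr_cell[OF II_pos[OF t]])
    have "dist x (Y t) \<le> dist x (xr w) + dist (xr w) (Y t)" by (rule dist_triangle)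
    also have "dist x (xr w) \<le> 1 / 2 ^ (k + 1)" using cell_diam[of x i v "xr w"] x xw wv lv by simp
    also have "dist (xr w) (Y t) \<le> 1 / 2 ^ k" using Y_props(3)[OF t01, of k] pw unfolding Z_def by simp
    also have "1 / 2 ^ (k + 1) + 1 / 2 ^ k \<le> (\<delta>::real)" unfolding \<delta>_def by (simp add: field_simps)
    finally show "ennreal (dist (fst (x, t)) (Y (snd (x, t)))) \<le> ennreal \<delta>" by (simp add: ennreal_leI)
  qed
  also have "(\<integral>\<^sup>+ x. ennreal (1 - S1.F x) * ennreal (dist x0 x) \<partial>\<nu>s n) \<le> ennreal (K * r) + tailK x0 K (\<nu>s n)"
  proof -
    have mF: "(\<lambda>x. ennreal (K * (1 - S1.F x))) \<in> borel_measurable (\<nu>s n)" using S1.F_meas by measurable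
    have mT: "(\<lambda>y. ennreal (if K < dist x0 y then dist x0 y else 0)) \<in> borel_measurable (\<nu>s n)"
      by (rule meas_borel_sets[OF nu_sets]) measurable
    have "(\<integral>\<^sup>+ x. ennreal (1 - S1.F x) * ennreal (dist x0 x) \<partial>\<nu>s n) \<le>
        (\<integral>\<^sup>+ x. ennreal (K * (1 - S1.F x)) + ennreal (if K < dist x0 x then dist x0 x else 0) \<partial>\<nu>s n)"
    proof (intro nn_integral_mono)
      fix x
      have F: "0 \<le> 1 - S1.F x" "1 - S1.F x \<le> 1" using S1.F_bounds[of x] by auto
      have "(1 - S1.F x) * dist x0 x \<le> K * (1 - S1.F x) + (if K < dist x0 x then dist x0 x else 0)"
      proof (cases "K < dist x0 x")
        case True
        have "(1 - S1.F x) * dist x0 x \<le> 1 * dist x0 x" using F by (intro mult_right_mono) auto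
        moreover have "0 \<le> K * (1 - S1.F x)" using F K by simp
        ultimately show ?thesis using True by simp
      next
        case False
        then have "(1 - S1.F x) * dist x0 x \<le> (1 - S1.F x) * K" using F by (intro mult_left_mono) auto
        then show ?thesis using False by (simp add: mult.commute)
      qed
      then show "ennreal (1 - S1.F x) * ennreal (dist x0 x) \<le> ennreal (K * (1 - S1.F x)) + ennreal (if K < dist x0 x then dist x0 x else 0)"
        using F K by (simp add: ennreal_mult[symmetric] ennreal_plus[symmetric] ennreal_leI del: ennreal_plus)
    qed
    also have "\<dots> = (\<integral>\<^sup>+ x. ennreal K * ennreal (1 - S1.F x) \<partial>\<nu>s n) + tailK x0 K (\<nu>s n)"
      unfolding tailK_def using K S1.F_bounds by (subst nn_integral_add[OF mF mT]) (simp add: ennreal_mult)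
    also have "(\<integral>\<^sup>+ x. ennreal K * ennreal (1 - S1.F x) \<partial>\<nu>s n) = ennreal K * ennreal r"
      using S1.F_meas by (subst nn_integral_cmult) (measurable, simp add: S1.int_ennG r_def)
    also have "ennreal K * ennreal r = ennreal (K * r)" using K r_nonneg by (simp add: ennreal_mult)
    finally show ?thesis .
  qed
  also have "(\<integral>\<^sup>+ t. ennreal (1 - S2.F t) * ennreal K \<partial>L) = ennreal (K * r)"
  proof -
    have "(\<integral>\<^sup>+ t. ennreal (1 - S2.F t) * ennreal K \<partial>L) = ennreal r * ennreal K"
      using S2.F_meas by (subst nn_integral_multc) (measurable, simp add: S2.int_ennG r_def)
    then show ?thesis using K r_nonneg by (simp add: ennreal_mult mult.commute)
  qed
  finally have cb: "cost \<pi> \<le> ennreal \<delta> + (ennreal (K * r) + tailK x0 K (\<nu>s n)) + ennreal (K * r)"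
    by (simp add: add_mono)
  have "ennreal \<delta> + (ennreal (K * r) + tailK x0 K (\<nu>s n)) + ennreal (K * r)
      = ennreal (\<delta> + 2 * K * r + enn2real (tailK x0 K (\<nu>s n)))"
  proof -
    have tl_eq: "tailK x0 K (\<nu>s n) = ennreal (enn2real (tailK x0 K (\<nu>s n)))"
      using tail_fin by (simp add: less_top)
    define X where "X = enn2real (tailK x0 K (\<nu>s n))"
    have X0: "0 \<le> X" unfolding X_def by simp
    have c0: "0 \<le> K * r" using K r_nonneg by simp
    have d0: "0 \<le> \<delta>" unfolding \<delta>_def by simp
    have "ennreal \<delta> + (ennreal (K * r) + ennreal X) + ennreal (K * r) = ennreal (\<delta> + (K * r + X) + K * r)"
      using X0 c0 d0 by (simp only: ennreal_plus[symmetric] X0 c0 d0 add_nonneg_nonneg)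
    also have "\<delta> + (K * r + X) + K * r = \<delta> + 2 * K * r + X" by (simp add: algebra_simps)
    finally show ?thesis using tl_eq unfolding X_def by simp
  qed
  then have "cost \<pi> \<le> ennreal (\<delta> + 2 * K * r + enn2real (tailK x0 K (\<nu>s n)))" using cb by simp
  then have "w1 (\<nu>s n) \<mu> \<le> \<delta> + 2 * K * r + enn2real (tailK x0 K (\<nu>s n))"
    by (rule w1_le_cost[OF cpl]) (use K r_nonneg in \<open>simp add: \<delta>_def\<close>)
  moreover have "r = 1 - (\<Sum>w\<in>W. a w)" by (simp add: r_def)
  ultimately have "w1 (\<nu>s n) \<mu> \<le> \<delta> + 2 * K * (1 - (\<Sum>w\<in>W. a w)) + enn2real (tailK x0 K (\<nu>s n))" by simp
  then show ?thesis unfolding \<delta>_def a_def W_def .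
qed

end


lemma compactness2:
  fixes x0 :: "'a::metric_space" and \<nu>s :: "nat \<Rightarrow> 'a measure"
  assumes pr: "proper_space TYPE('a)" and K: "K > 0" and P: "\<And>n. \<nu>s n \<in> P1"
    and tl: "\<And>e. e > 0 \<Longrightarrow> \<exists>N. \<forall>n\<ge>N. tailK x0 K (\<nu>s n) \<le> ennreal e"
  shows "\<exists>r \<mu>. strict_mono r \<and> \<mu> \<in> P1 \<and> (\<lambda>n. w1 (\<nu>s (r n)) \<mu>) \<longlonglongrightarrow> 0"
proof -
  interpret constr x0 K \<nu>s by (unfold_locales) (use assms in auto)
  have "(\<lambda>n. w1 (\<nu>s (rr n)) \<mu>) \<longlonglongrightarrow> 0"
  proof (rule LIMSEQ_I)
    fix e :: real assume e: "e > 0"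
    obtain k where k: "(1/2::real) ^ k < e / 6" using real_arch_pow_inv[of "e/6" "1/2"] e by auto
    then have k': "2 / 2 ^ k < e / 3" by (simp add: power_one_over)
    define W where "W = WW (Suc k)"
    define rn where "rn n = 1 - (\<Sum>w\<in>W. min (p w) (q (rr n) w))" for n
    have "rn \<longlonglongrightarrow> 1 - (\<Sum>w\<in>W. min (p w) (p w))" unfolding rn_def by (intro tendsto_intros p_lim)
    then have "rn \<longlonglongrightarrow> 0" using sum_p[of "Suc k"] by (simp add: W_def)
    moreover have "e / (6 * K) > 0" using e K by simp
    ultimately obtain N1 where N1: "\<And>n. n \<ge> N1 \<Longrightarrow> norm (rn n - 0) < e / (6 * K)"
      by (meson LIMSEQ_D)
    obtain N2 where N2: "\<And>n. n \<ge> N2 \<Longrightarrow> tailK x0 K (\<nu>s n) \<le> ennreal (e / 4)"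
      using tl[of "e/4"] e by auto
    have "norm (w1 (\<nu>s (rr n)) \<mu> - 0) < e" if n: "n \<ge> max N1 N2" for n
    proof -
      have b: "w1 (\<nu>s (rr n)) \<mu> \<le> 2 / 2 ^ k + 2 * K * rn n + enn2real (tailK x0 K (\<nu>s (rr n)))"
        using w1_bound[of "rr n" k] unfolding rn_def W_def .
      have "2 * K * rn n < 2 * K * (e / (6 * K))"
        using N1[of n] n K by (intro mult_strict_left_mono) auto
      also have "\<dots> = e / 3" using K by (simp add: field_simps)
      finally have r3: "2 * K * rn n < e / 3" .
      have "n \<le> rr n" using seq_suble[OF rr_props(1)] by blast
      then have "tailK x0 K (\<nu>s (rr n)) \<le> ennreal (e / 4)" using N2 n by auto
      then have "enn2real (tailK x0 K (\<nu>s (rr n))) \<le> enn2real (ennreal (e / 4))"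
        by (intro enn2real_mono) auto
      then have t4: "enn2real (tailK x0 K (\<nu>s (rr n))) \<le> e / 4" using e by simp
      have w0: "0 \<le> w1 (\<nu>s (rr n)) \<mu>" by (simp add: w1_def)
      show ?thesis using b r3 t4 k' w0 by simp
    qed
    then show "\<exists>N. \<forall>n\<ge>N. norm (w1 (\<nu>s (rr n)) \<mu> - 0) < e" by blast
  qed
  then show ?thesis using rr_props(1) mu_P1 by blast
qed


theorem mainTheorem6:
  fixes f :: "'a::metric_space \<Rightarrow> 'a" and x0 :: 'a
    and R0 c :: real and m :: nat and Bw :: "'a measure set"
  assumes "proper_space TYPE('a)"
    and "continuous_on UNIV f"
    and "\<forall>\<mu>\<in>P1. pushfwd f \<mu> \<in> P1"
    and "w1_continuous (pushfwd f)"
    and "R0 \<ge> 0" and "0 \<le> c" and "c < 1" and "m > 0"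
    and "\<forall>R\<ge>R0. (f ^^ m) ` cball x0 R \<subseteq> cball x0 (c * R)"
    and "Bw \<subseteq> P1" and "w1_bounded Bw" and "w1_closed Bw"
  shows "admissible (pushfwd f) Bw"
proof -
  note pr = assms(1) and cf = assms(2) and R0 = assms(5) and c = assms(6,7) and H = assms(9)
    and sub = assms(10)
  define A where "A = R0 / (1 - c)"
  have A: "A \<ge> 0" unfolding A_def using R0 c by simp
  define K where "K = 2 * A + 1"
  have K: "K > 0" "K \<ge> 2 * A" unfolding K_def using A by auto
  obtain \<nu>0 r0 where \<nu>0: "\<nu>0 \<in> P1" "\<forall>\<mu>\<in>Bw. w1 \<nu>0 \<mu> \<le> r0"
    using assms(11) unfolding w1_bounded_def by blast
  define C where "C = enn2real (\<integral>\<^sup>+ x. ennreal (dist x0 x) \<partial>\<nu>0) + max r0 0"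
  have C0: "C \<ge> 0" unfolding C_def by simp
  have Cb: "(\<integral>\<^sup>+ x. ennreal (dist x0 x) \<partial>\<rho>) \<le> ennreal C" if "\<rho> \<in> Bw" for \<rho>
  proof -
    have fin: "(\<integral>\<^sup>+ x. ennreal (dist x0 x) \<partial>\<nu>0) < \<infinity>" by (rule P1_moment[OF \<nu>0(1)])
    have "(\<integral>\<^sup>+ x. ennreal (dist x0 x) \<partial>\<rho>) \<le> (\<integral>\<^sup>+ x. ennreal (dist x0 x) \<partial>\<nu>0) + ennreal (w1 \<nu>0 \<rho>)"
      using moment_w1[OF \<nu>0(1) _ pr] that sub by auto
    also have "\<dots> \<le> ennreal (enn2real (\<integral>\<^sup>+ x. ennreal (dist x0 x) \<partial>\<nu>0)) + ennreal (max r0 0)"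
      using fin \<nu>0(2) that by (intro add_mono ennreal_leI) (auto simp: less_top)
    also have "\<dots> = ennreal C" unfolding C_def by (simp add: ennreal_plus)
    finally show ?thesis .
  qed
  show ?thesis
    unfolding admissible_def
  proof (intro allI impI)
    fix s :: "nat \<Rightarrow> 'a measure" and ms :: "nat \<Rightarrow> nat"
    assume asm: "filterlim ms at_top sequentially \<and> (\<forall>n. \<forall>k\<le>ms n. (pushfwd f ^^ k) (s n) \<in> Bw)"
    define \<nu>s where "\<nu>s n = (pushfwd f ^^ ms n) (s n)" for n
    have P: "\<nu>s n \<in> P1" for n using asm sub unfolding \<nu>s_def by blast
    have tl: "\<exists>N. \<forall>n\<ge>N. tailK x0 K (\<nu>s n) \<le> ennreal e" if e: "e > 0" for e
    proof -
      have "(\<lambda>j. 2 * c ^ j * C) \<longlonglongrightarrow> 2 * 0 * C"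
        using c by (intro tendsto_intros LIMSEQ_power_zero) auto
      then have "eventually (\<lambda>j. 2 * c ^ j * C < e) sequentially"
        using e by (intro order_tendstoD(2)) auto
      then obtain j where j: "2 * c ^ j * C < e" by (auto simp: eventually_sequentially)
      have "eventually (\<lambda>n. j * m \<le> ms n) sequentially"
        using asm by (simp add: filterlim_at_top)
      then obtain N where N: "\<And>n. n \<ge> N \<Longrightarrow> j * m \<le> ms n" by (auto simp: eventually_sequentially)
      have "tailK x0 K (\<nu>s n) \<le> ennreal e" if n: "n \<ge> N" for n
      proof -
        define \<rho> where "\<rho> = (pushfwd f ^^ (ms n - j * m)) (s n)"
        have \<rho>B: "\<rho> \<in> Bw" unfolding \<rho>_def using asm by auto
        then have s\<rho>: "sets \<rho> = sets borel" using sub unfolding P1_def by auto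
        have eq0: "(pushfwd f ^^ (j * m + (ms n - j * m))) (s n) = (pushfwd f ^^ (j * m)) ((pushfwd f ^^ (ms n - j * m)) (s n))"
          by (simp add: funpow_add)
        have "\<nu>s n = (pushfwd f ^^ (j * m)) \<rho>"
          unfolding \<nu>s_def \<rho>_def using N[OF n] eq0 by simp
        also have "\<dots> = distr \<rho> borel (f ^^ (j * m))" by (rule pushfwd_iter[OF cf s\<rho>])
        finally have eq: "\<nu>s n = distr \<rho> borel (f ^^ (j * m))" .
        have "tailK x0 K (\<nu>s n) \<le> ennreal (2 * c ^ j) * (\<integral>\<^sup>+ x. ennreal (dist x0 x) \<partial>\<rho>)"
          unfolding eq
          by (rule tail_iter[OF cf s\<rho> _ _ A K(2) funpow_meas[OF cf]])
            (use c contraction_iter[OF R0 c H] in \<open>auto simp: A_def\<close>)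
        also have "\<dots> \<le> ennreal (2 * c ^ j) * ennreal C" by (intro mult_left_mono Cb \<rho>B) simp
        also have "\<dots> = ennreal (2 * c ^ j * C)" using c C0 by (simp add: ennreal_mult)
        also have "\<dots> \<le> ennreal e" using j by (intro ennreal_leI) simp
        finally show ?thesis .
      qed
      then show ?thesis by blast
    qed
    obtain r \<mu> where "strict_mono r" "\<mu> \<in> P1" "(\<lambda>n. w1 (\<nu>s (r n)) \<mu>) \<longlonglongrightarrow> 0"
      using compactness2[OF pr K(1) P tl] by blast
    then show "\<exists>r \<mu>. strict_mono r \<and> \<mu> \<in> P1 \<and> (\<lambda>n. w1 ((pushfwd f ^^ ms (r n)) (s (r n))) \<mu>) \<longlonglongrightarrow> 0"
      unfolding \<nu>s_def by blast
  qed
qed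

end
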